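(* There is an absolute constant $C>0$ such that for every undirected graph $G=(V,E,\omega)$ on $n$ vertices with positive edge weights and every integer $k\ge 1$, there exists a weighted edge set $H$ on $V$ with at most $C\, n^{1+1/(2^k-1)}$ edges which, for every $0<\epsilon<1$ simultaneously, is a $(\beta,\epsilon)$-hopset of $G$ with $\beta=\left(Ck/\epsilon\right)^{k}$.
   Context: For a weighted graph $F$ and positive integer $\beta$, $d^{(\beta)}_F(u,v)$ denotes the minimum length of a $u$–$v$ path in $F$ with at most $\beta$ edges. A weighted edge set $H$ on $V$ (weights $\omega_H(u,v)\ge d_G(u,v)$) is a $(\beta,\epsilon)$-hopset of $G$ if for all $u,v\in V$, $d_G(u,v)\le d^{(\beta)}_{G\cup H}(u,v)\le(1+\epsilon)d_G(u,v)$, where $G\cup H$ has edge set $E\cup H$. *)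

theory Defs
  imports "HOL-Analysis.Analysis"
begin

definition undirected_graph :: "'a set \<Rightarrow> 'a set set \<Rightarrow> bool" where
  "undirected_graph V E \<longleftrightarrow> finite V \<and> (\<forall>e\<in>E. e \<subseteq> V \<and> card e = 2)"

definition positive_weights :: "'a set set \<Rightarrow> ('a set \<Rightarrow> real) \<Rightarrow> bool" where
  "positive_weights E w \<longleftrightarrow> (\<forall>e\<in>E. w e > 0)"

definition is_path :: "'a set \<Rightarrow> 'a set set \<Rightarrow> 'a list \<Rightarrow> 'a \<Rightarrow> 'a \<Rightarrow> bool" where
  "is_path V F xs u v \<longleftrightarrow> xs \<noteq> [] \<and> set xs \<subseteq> V \<and> hd xs = u \<and> last xs = v \<and>
     (\<forall>i < length xs - 1. {xs ! i, xs ! Suc i} \<in> F)"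

definition path_hops :: "'a list \<Rightarrow> nat" where
  "path_hops xs = length xs - 1"

definition path_length :: "('a set \<Rightarrow> real) \<Rightarrow> 'a list \<Rightarrow> real" where
  "path_length w xs = (\<Sum>i < length xs - 1. w {xs ! i, xs ! Suc i})"

text \<open>d_F(u,v): shortest path distance (infinite if no path).\<close>
definition dist_graph :: "'a set \<Rightarrow> 'a set set \<Rightarrow> ('a set \<Rightarrow> real) \<Rightarrow> 'a \<Rightarrow> 'a \<Rightarrow> ereal" where
  "dist_graph V F w u v = (INF xs \<in> {xs. is_path V F xs u v}. ereal (path_length w xs))"

definition hop_dist :: "'a set \<Rightarrow> 'a set set \<Rightarrow> ('a set \<Rightarrow> real) \<Rightarrow> real \<Rightarrow> 'a \<Rightarrow> 'a \<Rightarrow> ereal" where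
  "hop_dist V F w \<beta> u v =
     (INF xs \<in> {xs. is_path V F xs u v \<and> real (path_hops xs) \<le> \<beta>}. ereal (path_length w xs))"

definition union_weight :: "'a set set \<Rightarrow> ('a set \<Rightarrow> real) \<Rightarrow> 'a set set \<Rightarrow> ('a set \<Rightarrow> real)
    \<Rightarrow> 'a set \<Rightarrow> real" where
  "union_weight E w H wH e =
     (if e \<in> E \<and> e \<in> H then min (w e) (wH e) else if e \<in> E then w e else wH e)"

definition is_hopset :: "'a set \<Rightarrow> 'a set set \<Rightarrow> ('a set \<Rightarrow> real) \<Rightarrow> 'a set set \<Rightarrow> ('a set \<Rightarrow> real)
    \<Rightarrow> real \<Rightarrow> real \<Rightarrow> bool" where
  "is_hopset V E w H wH \<beta> \<epsilon> \<longleftrightarrow>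
     (\<forall>e\<in>H. e \<subseteq> V \<and> card e = 2) \<and>
     (\<forall>u v. {u, v} \<in> H \<longrightarrow> ereal (wH {u, v}) \<ge> dist_graph V E w u v) \<and>
     (\<forall>u\<in>V. \<forall>v\<in>V.
        dist_graph V E w u v \<le> hop_dist V (E \<union> H) (union_weight E w H wH) \<beta> u v \<and>
        hop_dist V (E \<union> H) (union_weight E w H wH) \<beta> u v \<le> ereal (1 + \<epsilon>) * dist_graph V E w u v)"

end

theory Submission
  imports Defs
begin


lemma path_length_Nil[simp]: "path_length w [] = 0"
  by (simp add: path_length_def)
lemma path_length_single[simp]: "path_length w [x] = 0"
  by (simp add: path_length_def)
lemma path_length_Cons2[simp]: "path_length w (x # y # zs) = w {x,y} + path_length w (y # zs)"
  unfolding path_length_def by (simp add: sum.lessThan_Suc_shift del: sum.lessThan_Suc)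

lemma is_path_single[simp]: "is_path V F [x] u v \<longleftrightarrow> x \<in> V \<and> u = x \<and> v = x"
  by (auto simp: is_path_def)
lemma is_path_Nil[simp]: "\<not> is_path V F [] u v"
  by (auto simp: is_path_def)

lemma is_path_Cons2: "is_path V F (x # y # zs) u v \<longleftrightarrow> x = u \<and> x \<in> V \<and> {x,y} \<in> F \<and> is_path V F (y # zs) y v"
proof -
  have "(\<forall>i < length (x#y#zs) - 1. {(x#y#zs) ! i, (x#y#zs) ! Suc i} \<in> F) \<longleftrightarrow>
        {x,y} \<in> F \<and> (\<forall>i < length (y#zs) - 1. {(y#zs) ! i, (y#zs) ! Suc i} \<in> F)"
    by (auto simp: less_Suc_eq_0_disj)
  then show ?thesis by (auto simp: is_path_def)
qed

lemma path_hops_simps[simp]: "path_hops [] = 0" "path_hops [x] = 0" "path_hops (x#y#zs) = Suc (path_hops (y#zs))"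
  by (auto simp: path_hops_def)

lemma is_path_hd: "is_path V F xs u v \<Longrightarrow> hd xs = u" by (simp add: is_path_def)
lemma is_path_last: "is_path V F xs u v \<Longrightarrow> last xs = v" by (simp add: is_path_def)
lemma is_path_ends: "is_path V F xs u v \<Longrightarrow> u \<in> V \<and> v \<in> V"
  unfolding is_path_def by (metis hd_in_set last_in_set subsetD)

lemma is_path_Cons: "is_path V F (x # ys) u v \<longleftrightarrow> x = u \<and> x \<in> V \<and>
   (if ys = [] then v = x else {x, hd ys} \<in> F \<and> is_path V F ys (hd ys) v)"
  by (cases ys) (auto simp: is_path_Cons2)

lemma path_concat:
  assumes "is_path V F xs u v" "is_path V F ys v z"
  shows "is_path V F (xs @ tl ys) u z \<and> path_hops (xs @ tl ys) = path_hops xs + path_hops ys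
     \<and> path_length w (xs @ tl ys) = path_length w xs + path_length w ys"
  using assms
proof (induction xs arbitrary: u)
  case Nil then show ?case by simp
next
  case (Cons x xs)
  show ?case
  proof (cases xs)
    case Nil
    with Cons.prems have "x = u" "u = v" by auto
    with Cons.prems Nil show ?thesis
      by (cases ys) (auto simp: is_path_def path_hops_def)
  next
    case (Cons y zs)
    from Cons.prems have h: "x = u" "x \<in> V" "{x,y} \<in> F" "is_path V F (y # zs) y v"
      using \<open>xs = y # zs\<close> by (auto simp: is_path_Cons2)
    from Cons.IH[OF h(4)[folded \<open>xs = y # zs\<close>] Cons.prems(2)]
    show ?thesis using h \<open>xs = y # zs\<close> by (auto simp: is_path_Cons2)
  qed
qed

lemma path_rev:
  assumes "is_path V F xs u v"
  shows "is_path V F (rev xs) v u \<and> path_hops (rev xs) = path_hops xs \<and> path_length w (rev xs) = path_length w xs"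
  using assms
proof (induction xs arbitrary: u)
  case Nil then show ?case by simp
next
  case (Cons x xs)
  show ?case
  proof (cases xs)
    case Nil with Cons.prems show ?thesis by simp
  next
    case (Cons y zs)
    from Cons.prems have h: "x = u" "x \<in> V" "{x,y} \<in> F" "is_path V F (y # zs) y v"
      using \<open>xs = y # zs\<close> by (auto simp: is_path_Cons2)
    have ih: "is_path V F (rev xs) v y \<and> path_hops (rev xs) = path_hops xs \<and> path_length w (rev xs) = path_length w xs"
      using Cons.IH h(4) \<open>xs = y # zs\<close> by auto
    have e: "is_path V F [y, x] y x" using h by (auto simp: is_path_Cons2 insert_commute is_path_ends[OF h(4)])
    have "is_path V F (rev xs @ tl [y,x]) v x \<and> path_hops (rev xs @ tl [y,x]) = path_hops (rev xs) + path_hops [y,x]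
     \<and> path_length w (rev xs @ tl [y,x]) = path_length w (rev xs) + path_length w [y,x]"
      by (rule path_concat[OF conjunct1[OF ih] e])
    then show ?thesis using ih h \<open>xs = y # zs\<close> by (simp add: insert_commute)
  qed
qed


lemma path_split:
  assumes "is_path V F (xs @ y # ys) u v"
  shows "is_path V F (xs @ [y]) u y \<and> is_path V F (y # ys) y v \<and>
    path_length w (xs @ y # ys) = path_length w (xs @ [y]) + path_length w (y # ys) \<and>
    path_hops (xs @ y # ys) = path_hops (xs @ [y]) + path_hops (y # ys)"
  using assms
proof (induction xs arbitrary: u)
  case Nil
  then show ?case by (auto simp: is_path_def path_hops_def)
next
  case (Cons x xs)
  show ?case
  proof (cases xs)
    case Nil
    with Cons.prems have h: "x = u" "x \<in> V" "{x,y} \<in> F" "is_path V F (y # ys) y v"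
      by (auto simp: is_path_Cons2)
    then show ?thesis using Nil by (auto simp: is_path_Cons2 path_hops_def is_path_ends)
  next
    case (Cons z zs)
    with Cons.prems have h: "x = u" "x \<in> V" "{x,z} \<in> F" "is_path V F (xs @ y # ys) z v"
      by (auto simp: is_path_Cons2)
    from Cons.IH[OF h(4)] show ?thesis using h Cons by (auto simp: is_path_Cons2)
  qed
qed

locale wgraph =
  fixes V :: "'a set" and E :: "'a set set" and w :: "'a set \<Rightarrow> real"
  assumes ug: "undirected_graph V E" and pw: "positive_weights E w"
begin

abbreviation "D \<equiv> dist_graph V E w"

lemma finV: "finite V" using ug by (simp add: undirected_graph_def)
lemma E_sub: "e \<in> E \<Longrightarrow> e \<subseteq> V \<and> card e = 2" using ug by (simp add: undirected_graph_def)
lemma w_pos: "e \<in> E \<Longrightarrow> w e > 0" using pw by (simp add: positive_weights_def)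

lemma pl_nonneg: "is_path V E xs u v \<Longrightarrow> path_length w xs \<ge> 0"
proof (induction xs arbitrary: u)
  case (Cons x xs)
  then show ?case
    by (cases xs) (auto simp: is_path_Cons2 intro: add_nonneg_nonneg less_imp_le[OF w_pos])
qed simp

lemma simple_path:
  assumes "is_path V E xs u v"
  shows "\<exists>ys. is_path V E ys u v \<and> distinct ys \<and> path_length w ys \<le> path_length w xs"
  using assms
proof (induction "length xs" arbitrary: xs rule: less_induct)
  case less
  show ?case
  proof (cases "distinct xs")
    case True then show ?thesis using less.prems by auto
  next
    case False
    then obtain as bs cs y where xs: "xs = as @ [y] @ bs @ [y] @ cs" by (metis not_distinct_decomp)
    have p: "is_path V E (as @ y # (bs @ y # cs)) u v" using less.prems xs by simp
    note s1 = path_split[OF p, of w]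
    have p2: "is_path V E ((y # bs) @ y # cs) y v" using s1 by simp
    note s2 = path_split[OF p2, of w]
    have c: "is_path V E ((as @ [y]) @ tl (y # cs)) u v \<and>
      path_length w ((as @ [y]) @ tl (y # cs)) = path_length w (as @ [y]) + path_length w (y # cs)"
      using path_concat[of V E "as @ [y]" u y "y # cs" v w] s1 s2 by auto
    have nn: "path_length w ((y # bs) @ [y]) \<ge> 0" using s2 pl_nonneg by blast
    have len: "length ((as @ [y]) @ tl (y # cs)) < length xs" using xs by simp
    from less.hyps[OF len] c obtain ys where
      "is_path V E ys u v" "distinct ys" "path_length w ys \<le> path_length w ((as @ [y]) @ tl (y # cs))"
      by blast
    moreover have "path_length w ((as @ [y]) @ tl (y # cs)) \<le> path_length w xs"
      using c s1 s2 nn xs by simp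
    ultimately show ?thesis by force
  qed
qed

lemma shortest_exists:
  assumes "is_path V E xs u v"
  shows "\<exists>P. is_path V E P u v \<and> (\<forall>Q. is_path V E Q u v \<longrightarrow> path_length w P \<le> path_length w Q)"
proof -
  let ?S = "{ys. is_path V E ys u v \<and> distinct ys}"
  have "?S \<subseteq> {ys. set ys \<subseteq> V \<and> distinct ys}" by (auto simp: is_path_def)
  then have fin: "finite ?S" using finite_subset_distinct[OF finV] finite_subset by blast
  obtain ys0 where "ys0 \<in> ?S" using simple_path[OF assms] by blast
  then have ne: "?S \<noteq> {}" by blast
  have "Min (path_length w ` ?S) \<in> path_length w ` ?S" using fin ne by (intro Min_in) auto
  then obtain P where P0: "P \<in> ?S" "path_length w P = Min (path_length w ` ?S)" by auto
  have P: "P \<in> ?S" "\<forall>Q\<in>?S. path_length w P \<le> path_length w Q"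
    using P0 fin by auto
  show ?thesis
  proof (intro exI conjI allI impI)
    show "is_path V E P u v" using P by auto
    fix Q assume "is_path V E Q u v"
    from simple_path[OF this] obtain ys where "ys \<in> ?S" "path_length w ys \<le> path_length w Q" by auto
    with P show "path_length w P \<le> path_length w Q" by force
  qed
qed

definition "sp P u v \<longleftrightarrow> is_path V E P u v \<and> (\<forall>Q. is_path V E Q u v \<longrightarrow> path_length w P \<le> path_length w Q)"

lemma sp_D: "sp P u v \<Longrightarrow> D u v = ereal (path_length w P)"
  unfolding sp_def dist_graph_def
  by (intro antisym INF_lower INF_greatest) auto

lemma D_le_path: "is_path V E P u v \<Longrightarrow> D u v \<le> ereal (path_length w P)"
  unfolding dist_graph_def by (intro INF_lower) auto

lemma D_infty: "\<not> (\<exists>P. is_path V E P u v) \<Longrightarrow> D u v = \<infinity>"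
  unfolding dist_graph_def by (auto simp: top_ereal_def)

lemma D_cases: "D u v = \<infinity> \<or> (\<exists>P. sp P u v)"
  using shortest_exists D_infty unfolding sp_def by blast

lemma D_nonneg: "D u v \<ge> 0"
  using D_cases[of u v] sp_D pl_nonneg unfolding sp_def by force

lemma D_refl: "u \<in> V \<Longrightarrow> D u u = 0"
  using D_le_path[of "[u]" u u] D_nonneg[of u u] by (auto simp: zero_ereal_def)

lemma D_sym: "D u v = D v u"
proof -
  have *: "D v u \<le> D u v" for u v
  proof (cases "D u v = \<infinity>")
    case False
    then obtain P where "sp P u v" using D_cases by blast
    then show ?thesis using sp_D path_rev[of V E P u v w] D_le_path unfolding sp_def by metis
  qed simp
  show ?thesis using *[of u v] *[of v u] by simp
qed

lemma D_triangle: "D u z \<le> D u v + D v z"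
proof (cases "D u v = \<infinity> \<or> D v z = \<infinity>")
  case True then show ?thesis using D_nonneg by auto
next
  case False
  then obtain P Q where "sp P u v" "sp Q v z" using D_cases by blast
  then show ?thesis using path_concat[of V E P u v Q z w] sp_D D_le_path unfolding sp_def
    by (metis plus_ereal.simps(1))
qed

lemma D_edge: "{u,v} \<in> E \<Longrightarrow> D u v \<le> ereal (w {u,v})"
  using D_le_path[of "[u,v]" u v] E_sub[of "{u,v}"] by (auto simp: is_path_Cons2)

lemma sp_split:
  assumes "sp (xs @ y # ys) u v"
  shows "sp (xs @ [y]) u y \<and> sp (y # ys) y v"
proof -
  have p: "is_path V E (xs @ y # ys) u v" using assms sp_def by auto
  note s = path_split[OF p, of w]
  have a: "sp (xs @ [y]) u y"
    unfolding sp_def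
  proof (intro conjI allI impI)
    show "is_path V E (xs @ [y]) u y" using s by auto
    fix Q assume Q: "is_path V E Q u y"
    have "is_path V E (Q @ tl (y # ys)) u v \<and> path_length w (Q @ tl (y # ys)) = path_length w Q + path_length w (y#ys)"
      using path_concat[OF Q, of "y # ys" v w] s by auto
    then show "path_length w (xs @ [y]) \<le> path_length w Q" using assms s unfolding sp_def by force
  qed
  have b: "sp (y # ys) y v"
    unfolding sp_def
  proof (intro conjI allI impI)
    show "is_path V E (y # ys) y v" using s by auto
    fix Q assume Q: "is_path V E Q y v"
    have "is_path V E ((xs @ [y]) @ tl Q) u v \<and> path_length w ((xs @ [y]) @ tl Q) = path_length w (xs @ [y]) + path_length w Q"
      using path_concat[of V E "xs @ [y]" u y Q v w] Q s by auto
    then show "path_length w (y # ys) \<le> path_length w Q" using assms s unfolding sp_def by force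
  qed
  from a b show ?thesis ..
qed

lemma sp_rev: "sp P u v \<Longrightarrow> sp (rev P) v u"
  unfolding sp_def using path_rev by (metis rev_rev_ident)

end


context wgraph begin

definition wD :: "'a set \<Rightarrow> real" where
  "wD e = real_of_ereal (D (fst (SOME p. e = {fst p, snd p})) (snd (SOME p. e = {fst p, snd p})))"

lemma wD_eq: "wD {a,b} = real_of_ereal (D a b)"
proof -
  define p where "p = (SOME p. {a,b} = {fst p, snd p})"
  have "\<exists>p. {a,b} = {fst p, snd p}" by (rule exI[of _ "(a,b)"]) simp
  then have "{a,b} = {fst p, snd p}" unfolding p_def by (rule someI_ex)
  then have "(fst p = a \<and> snd p = b) \<or> (fst p = b \<and> snd p = a)"
    unfolding doubleton_eq_iff by blast
  moreover have "wD {a,b} = real_of_ereal (D (fst p) (snd p))" unfolding wD_def p_def by simp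
  ultimately show ?thesis using D_sym[of a b] by auto
qed

lemma D_real: "D a b \<noteq> \<infinity> \<Longrightarrow> D a b = ereal (real_of_ereal (D a b))"
  using D_nonneg[of a b] by (cases "D a b") auto

end

locale hier = wgraph V E w for V :: "'a set" and E and w +
  fixes A :: "nat \<Rightarrow> 'a set" and m :: nat
  assumes A0: "A 0 = V" and Amono: "A (Suc i) \<subseteq> A i" and Atop: "A (Suc m) = {}"
begin

lemma A_sub: "A i \<subseteq> V"
  by (induction i) (use A0 Amono in auto)

lemma A_fin: "finite (A i)" using A_sub finV finite_subset by blast

definition Dset :: "'a \<Rightarrow> 'a set \<Rightarrow> ereal" where "Dset u S = (INF s\<in>S. D u s)"

definition piv :: "nat \<Rightarrow> 'a \<Rightarrow> 'a" where
  "piv i u = (SOME p. p \<in> A (Suc i) \<and> D u p = Dset u (A (Suc i)))"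

lemma piv: assumes "A (Suc i) \<noteq> {}" shows "piv i u \<in> A (Suc i) \<and> D u (piv i u) = Dset u (A (Suc i))"
proof -
  have "Min ((D u) ` A (Suc i)) \<in> (D u) ` A (Suc i)" using assms A_fin by (intro Min_in) auto
  moreover have "Dset u (A (Suc i)) = Min ((D u) ` A (Suc i))"
    unfolding Dset_def using assms A_fin by (simp add: Min_Inf)
  ultimately have "\<exists>p. p \<in> A (Suc i) \<and> D u p = Dset u (A (Suc i))" by auto
  then show ?thesis unfolding piv_def by (rule someI_ex)
qed

lemma Dset_le: "p \<in> S \<Longrightarrow> Dset u S \<le> D u p" unfolding Dset_def by (rule INF_lower)

definition Hb :: "'a set set" where
  "Hb = {{u,v} | u v i. i \<le> m \<and> u \<in> A i \<and> v \<in> A i \<and> u \<noteq> v \<and> D u v \<noteq> \<infinity> \<and> D u v < Dset u (A (Suc i))}"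

definition Hp :: "'a set set" where
  "Hp = {{u, piv i u} | u i. i < m \<and> u \<in> A i \<and> u \<notin> A (Suc i) \<and> A (Suc i) \<noteq> {} \<and> D u (piv i u) \<noteq> \<infinity>}"

definition "H = Hb \<union> Hp"

abbreviation "uw \<equiv> union_weight E w H wD"

lemma H_props: "e \<in> H \<Longrightarrow> \<exists>u v. e = {u,v} \<and> u \<in> V \<and> v \<in> V \<and> u \<noteq> v \<and> D u v \<noteq> \<infinity>"
proof -
  assume "e \<in> H"
  then consider (b) u v i where "e = {u,v}" "i \<le> m" "u \<in> A i" "v \<in> A i" "u \<noteq> v" "D u v \<noteq> \<infinity>"
    | (p) u i where "e = {u, piv i u}" "i < m" "u \<in> A i" "u \<notin> A (Suc i)" "A (Suc i) \<noteq> {}" "D u (piv i u) \<noteq> \<infinity>"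
    unfolding H_def Hb_def Hp_def by (elim UnE CollectE exE conjE) metis+
  then show ?thesis
  proof cases
    case b then show ?thesis using A_sub by blast
  next
    case p
    have "piv i u \<in> A (Suc i)" using piv[OF p(5)] by blast
    then show ?thesis using p A_sub[of i] A_sub[of "Suc i"] by (intro exI[of _ u] exI[of _ "piv i u"]) auto
  qed
qed

lemma H_sub: "e \<in> H \<Longrightarrow> e \<subseteq> V \<and> card e = 2"
proof -
  assume "e \<in> H"
  then obtain u v where "e = {u,v}" "u \<in> V" "v \<in> V" "u \<noteq> v" using H_props by blast
  then show ?thesis by simp
qed

definition HP :: "nat \<Rightarrow> 'a \<Rightarrow> 'a \<Rightarrow> real \<Rightarrow> bool" where
  "HP h x y L \<longleftrightarrow> (\<exists>xs. is_path V (E \<union> H) xs x y \<and> path_hops xs \<le> h \<and> path_length uw xs \<le> L)"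

lemma HP_concat: "HP a x y L1 \<Longrightarrow> HP b y z L2 \<Longrightarrow> HP (a+b) x z (L1+L2)"
  unfolding HP_def
proof (elim exE conjE)
  fix xs ys assume "is_path V (E \<union> H) xs x y" "path_hops xs \<le> a" "path_length uw xs \<le> L1"
    "is_path V (E \<union> H) ys y z" "path_hops ys \<le> b" "path_length uw ys \<le> L2"
  then show "\<exists>xs. is_path V (E \<union> H) xs x z \<and> path_hops xs \<le> a + b \<and> path_length uw xs \<le> L1 + L2"
    using path_concat[of V "E \<union> H" xs x y ys z uw] by (intro exI[of _ "xs @ tl ys"]) auto
qed

lemma HP_mono: "HP a x y L \<Longrightarrow> a \<le> a' \<Longrightarrow> L \<le> L' \<Longrightarrow> HP a' x y L'"
  unfolding HP_def by force

lemma HP_refl: "x \<in> V \<Longrightarrow> HP 0 x x 0"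
  unfolding HP_def by (intro exI[of _ "[x]"]) auto

lemma HP_sym: "HP h x y L \<Longrightarrow> HP h y x L"
  unfolding HP_def
proof (elim exE conjE)
  fix xs assume "is_path V (E \<union> H) xs x y" "path_hops xs \<le> h" "path_length uw xs \<le> L"
  then show "\<exists>xs. is_path V (E \<union> H) xs y x \<and> path_hops xs \<le> h \<and> path_length uw xs \<le> L"
    using path_rev[of V "E \<union> H" xs x y uw] by (intro exI[of _ "rev xs"]) auto
qed

lemma HP_E: assumes "{x,y} \<in> E" shows "HP 1 x y (w {x,y})"
  unfolding HP_def
proof (intro exI[of _ "[x,y]"] conjI)
  show "is_path V (E \<union> H) [x, y] x y" using E_sub[OF assms] assms by (auto simp: is_path_Cons2)
  show "path_length uw [x, y] \<le> w {x, y}" using assms by (simp add: union_weight_def)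
qed simp

lemma HP_H: assumes "{x,y} \<in> H" shows "HP 1 x y (wD {x,y})"
  unfolding HP_def
proof (intro exI[of _ "[x,y]"] conjI)
  show "is_path V (E \<union> H) [x, y] x y" using H_sub[OF assms] assms by (auto simp: is_path_Cons2)
  show "path_length uw [x, y] \<le> wD {x, y}" using assms by (simp add: union_weight_def)
qed simp

lemma uw_lower: assumes "{a,b} \<in> E \<union> H" shows "D a b \<le> ereal (uw {a,b})"
proof -
  have 1: "D a b \<le> ereal (w {a,b})" if "{a,b} \<in> E" using D_edge that .
  have 2: "D a b \<le> ereal (wD {a,b})" if hab: "{a,b} \<in> H"
  proof -
    obtain u v where "{a,b} = {u,v}" "D u v \<noteq> \<infinity>" using H_props[OF hab] by blast
    then have "D a b \<noteq> \<infinity>" using D_sym[of u v] unfolding doubleton_eq_iff by auto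
    then show ?thesis using wD_eq D_real by simp
  qed
  show ?thesis
  proof (cases "{a,b} \<in> E \<and> {a,b} \<in> H")
    case True
    then have "uw {a,b} = min (w {a,b}) (wD {a,b})" unfolding union_weight_def by simp
    then show ?thesis using 1 2 True by (simp add: min_def)
  next
    case False
    then show ?thesis using 1 2 assms unfolding union_weight_def by auto
  qed
qed

lemma path_lower: "is_path V (E \<union> H) xs x y \<Longrightarrow> D x y \<le> ereal (path_length uw xs)"
proof (induction xs arbitrary: x)
  case (Cons a xs)
  show ?case
  proof (cases xs)
    case Nil then show ?thesis using Cons.prems D_refl by (simp add: zero_ereal_def)
  next
    case (Cons b zs)
    then have h: "a = x" "{a,b} \<in> E \<union> H" "is_path V (E \<union> H) xs b y"
      using Cons.prems by (auto simp: is_path_Cons2)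
    have "D x y \<le> D x b + D b y" by (rule D_triangle)
    also have "\<dots> \<le> ereal (uw {a,b}) + ereal (path_length uw xs)"
      using uw_lower[OF h(2)] Cons.IH[OF h(3)] h(1) by (intro add_mono) auto
    finally show ?thesis using Cons h by simp
  qed
qed simp

lemma HP_lower: "HP h x y L \<Longrightarrow> D x y \<le> ereal L"
  unfolding HP_def
proof (elim exE conjE)
  fix xs assume "is_path V (E \<union> H) xs x y" "path_hops xs \<le> h" "path_length uw xs \<le> L"
  then show "D x y \<le> ereal L" using path_lower[of xs x y] order_trans by force
qed

lemma bunch_edge:
  assumes "i \<le> m" "u \<in> A i" "v \<in> A i" "D u v \<noteq> \<infinity>" "D u v < Dset u (A (Suc i))"
  shows "HP 1 u v (real_of_ereal (D u v))"
proof (cases "u = v")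
  case True
  have "u \<in> V" using A_sub assms by blast
  then show ?thesis using HP_refl[of u] D_refl[of u] True by (auto intro: HP_mono)
next
  case False
  then have "{u,v} \<in> H" unfolding H_def Hb_def using assms by blast
  then show ?thesis using HP_H wD_eq by metis
qed

lemma pivot_edge:
  assumes "i < m" "u \<in> A i" "A (Suc i) \<noteq> {}" "Dset u (A (Suc i)) \<noteq> \<infinity>"
  shows "\<exists>z \<in> A (Suc i). HP 1 u z (real_of_ereal (Dset u (A (Suc i)))) \<and> D u z = Dset u (A (Suc i))"
proof (cases "u \<in> A (Suc i)")
  case True
  have uV: "u \<in> V" using A_sub True by blast
  then have "Dset u (A (Suc i)) \<le> 0" using Dset_le[OF True, of u] D_refl[of u] by auto
  moreover have "Dset u (A (Suc i)) \<ge> 0" using D_nonneg[of u "piv i u"] piv[OF assms(3), of u] by simp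
  ultimately have z: "Dset u (A (Suc i)) = 0" by simp
  have "HP 1 u u 0" using HP_mono[OF HP_refl[OF uV], of 1 0] by simp
  then show ?thesis using True z D_refl[OF uV] by (intro bexI[of _ u]) simp_all
next
  case False
  note p = piv[OF assms(3), of u]
  have "D u (piv i u) \<noteq> \<infinity>" using p assms(4) by simp
  then have "{u, piv i u} \<in> Hp" unfolding Hp_def mem_Collect_eq
    using assms False by (intro exI[of _ u] exI[of _ i]) simp
  then have "{u, piv i u} \<in> H" unfolding H_def by simp
  then have "HP 1 u (piv i u) (wD {u, piv i u})" by (rule HP_H)
  then show ?thesis using wD_eq p by (intro bexI[of _ "piv i u"]) simp_all
qed

end


lemma sorted_consec:
  assumes "sorted_wrt (<) (cs :: nat list)" "Suc j < length cs" "c \<in> set cs"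
  shows "\<not> (cs ! j < c \<and> c < cs ! Suc j)"
proof
  assume h: "cs ! j < c \<and> c < cs ! Suc j"
  from assms(3) obtain k where k: "k < length cs" "cs ! k = c" by (metis in_set_conv_nth)
  have "j < k"
  proof (rule ccontr)
    assume "\<not> j < k"
    then have "k \<le> j" by simp
    then have "cs ! k \<le> cs ! j" using assms(1,2) k
      by (metis Suc_lessD le_eq_less_or_eq nless_le order_le_less_trans sorted_wrt_nth_less)
    then show False using h k by simp
  qed
  moreover have "k < Suc j"
  proof (rule ccontr)
    assume "\<not> k < Suc j"
    then have "Suc j \<le> k" by simp
    then have "cs ! Suc j \<le> cs ! k" using assms(1,2) k
      by (metis le_eq_less_or_eq nless_le sorted_wrt_nth_less)
    then show False using h k by simp
  qed
  ultimately show False by simp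
qed

lemma segmentation:
  fixes dd :: "nat \<Rightarrow> real" and r lv :: nat and \<Delta> :: real
  assumes mono: "\<And>a b. a \<le> b \<Longrightarrow> b \<le> r \<Longrightarrow> dd a \<le> dd b"
    and d0: "dd 0 = 0" and Dpos: "\<Delta> > 0" and dr: "dd r \<le> lv * \<Delta>"
  shows "\<exists>s c. s \<le> 2 * lv + 1 \<and> c 0 = 0 \<and> c s = r \<and>
    (\<forall>j<s. c j < c (Suc j) \<and> (c (Suc j) = Suc (c j) \<or> dd (c (Suc j)) - dd (c j) \<le> \<Delta>))"
proof -
  define am where "am j = Max {t. t \<le> r \<and> dd t \<le> real j * \<Delta>}" for j :: nat
  have amS: "am j \<le> r \<and> dd (am j) \<le> real j * \<Delta>" and amM: "\<And>t. t \<le> r \<Longrightarrow> dd t \<le> real j * \<Delta> \<Longrightarrow> t \<le> am j" for j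
  proof -
    have fin: "finite {t. t \<le> r \<and> dd t \<le> real j * \<Delta>}" by simp
    have ne: "0 \<in> {t. t \<le> r \<and> dd t \<le> real j * \<Delta>}" using d0 Dpos by simp
    show "am j \<le> r \<and> dd (am j) \<le> real j * \<Delta>" using Max_in[OF fin] ne unfolding am_def by blast
    show "\<And>t. t \<le> r \<Longrightarrow> dd t \<le> real j * \<Delta> \<Longrightarrow> t \<le> am j" unfolding am_def using fin by (intro Max_ge) auto
  qed
  define Cut where "Cut = {0, r} \<union> am ` {..<lv} \<union> (\<lambda>j. Suc (am j)) ` {j. j < lv \<and> am j < r}"
  have finC: "finite Cut" unfolding Cut_def by auto
  have Cle: "c \<le> r" if "c \<in> Cut" for c using that amS unfolding Cut_def by auto
  have cardC: "card Cut \<le> 2 * lv + 2"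
  proof -
    have "card Cut \<le> card {0, r} + card (am ` {..<lv}) + card ((\<lambda>j. Suc (am j)) ` {j. j < lv \<and> am j < r})"
      unfolding Cut_def by (meson card_Un_le le_trans add_mono order_refl)
    also have "\<dots> \<le> 2 + lv + lv"
    proof (intro add_mono)
      show "card {0, r} \<le> 2" by (simp add: card_insert_if)
      show "card (am ` {..<lv}) \<le> lv" using card_image_le[of "{..<lv}" am] by simp
      have "card ((\<lambda>j. Suc (am j)) ` {j. j < lv \<and> am j < r}) \<le> card {j. j < lv \<and> am j < r}"
        by (rule card_image_le) simp
      also have "\<dots> \<le> card {..<lv}" by (rule card_mono) auto
      finally show "card ((\<lambda>j. Suc (am j)) ` {j. j < lv \<and> am j < r}) \<le> lv" by simp
    qed
    finally show ?thesis by simp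
  qed
  define cs where "cs = sorted_list_of_set Cut"
  have cs_sorted: "sorted_wrt (<) cs" unfolding cs_def by simp
  have cs_set: "set cs = Cut" unfolding cs_def using finC by simp
  have cs_len: "length cs = card Cut" unfolding cs_def by simp
  have "0 \<in> Cut" unfolding Cut_def by simp
  then have lenpos: "length cs > 0" using cs_len finC by (auto simp: card_gt_0_iff)
  define s where "s = length cs - 1"
  define c where "c j = cs ! j" for j
  have s_le: "s \<le> 2 * lv + 1" unfolding s_def using cardC cs_len by simp
  have c_in: "c j \<in> Cut" if "j \<le> s" for j
    unfolding c_def using that lenpos s_def cs_set nth_mem by (metis Suc_pred' less_Suc_eq_le)
  have c_mono: "c j < c k" if "j < k" "k \<le> s" for j k
    unfolding c_def using cs_sorted that lenpos s_def by (metis Suc_pred' le_imp_less_Suc sorted_wrt_nth_less)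
  have c0: "c 0 = 0"
  proof -
    obtain k where k: "k < length cs" "cs ! k = 0" using \<open>0 \<in> Cut\<close> cs_set by (metis in_set_conv_nth)
    have "c 0 \<le> c k" using c_mono[of 0 k] k s_def by (cases "k = 0") (auto simp: less_imp_le)
    then show ?thesis using k c_def by simp
  qed
  have cs_: "c s = r"
  proof -
    have "r \<in> Cut" unfolding Cut_def by simp
    then obtain k where k: "k < length cs" "cs ! k = r" using cs_set by (metis in_set_conv_nth)
    have "c k \<le> c s" using c_mono[of k s] k s_def by (cases "k = s") (auto simp: less_imp_le)
    then show ?thesis using k c_def Cle[OF c_in[of s]] by simp
  qed
  have key: "c (Suc j) = Suc (c j) \<or> dd (c (Suc j)) - dd (c j) \<le> \<Delta>" if j: "j < s" for j
  proof (rule ccontr)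
    assume "\<not> ?thesis"
    then have ne: "c (Suc j) \<noteq> Suc (c j)" and big: "dd (c (Suc j)) - dd (c j) > \<Delta>" by auto
    have lt: "c j < c (Suc j)" using c_mono j by simp
    have cr: "c (Suc j) \<le> r" using Cle c_in j by simp
    have nobetween: "\<not> (c j < x \<and> x < c (Suc j))" if "x \<in> Cut" for x
      using sorted_consec[OF cs_sorted, of j x] that j s_def cs_set c_def by simp
    define J where "J = nat \<lceil>dd (c j) / \<Delta>\<rceil>"
    have ddnn: "dd (c j) \<ge> 0" using mono[of 0 "c j"] d0 lt cr by simp
    have J1: "dd (c j) \<le> real J * \<Delta>"
    proof -
      have "dd (c j) / \<Delta> \<le> real J" unfolding J_def by linarith
      then show ?thesis using Dpos by (simp add: divide_le_eq)
    qed
    have J2: "real J * \<Delta> < dd (c j) + \<Delta>"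
    proof -
      have nn: "dd (c j) / \<Delta> \<ge> 0" using ddnn Dpos by simp
      have "real J = of_int \<lceil>dd (c j) / \<Delta>\<rceil>" unfolding J_def using nn by simp
      then have "real J < dd (c j) / \<Delta> + 1" by linarith
      then show ?thesis using Dpos by (simp add: field_simps)
    qed
    have "real J * \<Delta> < real lv * \<Delta>" using J2 big mono[of "c (Suc j)" r] cr dr by linarith
    then have Jl: "J < lv" using Dpos by simp
    have a1: "c j \<le> am J" using amM[of "c j" J] J1 lt cr by simp
    have a2: "am J < c (Suc j)"
    proof (rule ccontr)
      assume "\<not> am J < c (Suc j)"
      then have "dd (c (Suc j)) \<le> dd (am J)" using mono amS by simp
      then show False using amS[of J] J2 big by linarith
    qed
    have "am J \<in> Cut" unfolding Cut_def using Jl by simp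
    then have "am J = c j" using nobetween a1 a2 by fastforce
    then have "Suc (c j) \<in> (\<lambda>j. Suc (am j)) ` {j. j < lv \<and> am j < r}"
      using Jl lt cr by (intro image_eqI[of _ _ J]) auto
    then have "Suc (c j) \<in> Cut" unfolding Cut_def by blast
    then show False using nobetween ne lt by (metis Suc_lessI lessI)
  qed
  show ?thesis
    by (rule exI[of _ s], rule exI[of _ c]) (use s_le c0 cs_ c_mono key in auto)
qed


context wgraph begin

lemma sp_ne: "sp P x y \<Longrightarrow> P \<noteq> [] \<and> P ! 0 = x \<and> P ! (length P - 1) = y"
  unfolding sp_def is_path_def by (auto simp: hd_conv_nth last_conv_nth)

lemma sp_prefix_suffix:
  assumes "sp P x y" "t < length P"
  shows "sp (take (Suc t) P) x (P!t) \<and> sp (drop t P) (P!t) y \<and>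
    path_length w P = path_length w (take (Suc t) P) + path_length w (drop t P)"
proof -
  have eq: "P = take t P @ P!t # drop (Suc t) P" using assms(2) by (simp add: id_take_nth_drop)
  have t1: "take (Suc t) P = take t P @ [P!t]" using assms(2) by (simp add: take_Suc_conv_app_nth)
  have d1: "drop t P = P!t # drop (Suc t) P" using assms(2) by (simp add: Cons_nth_drop_Suc)
  have "sp (take t P @ P!t # drop (Suc t) P) x y" using assms(1) eq by simp
  note a = sp_split[OF this]
  have p: "is_path V E (take t P @ P!t # drop (Suc t) P) x y" using assms(1) eq sp_def by simp
  note b = path_split[OF p, of w]
  show ?thesis using a b t1 d1 eq by metis
qed

definition "ddP P t = path_length w (take (Suc t) P)"

lemma sp_seg:
  assumes "sp P x y" "a \<le> b" "b < length P"
  shows "sp (take (Suc (b-a)) (drop a P)) (P!a) (P!b) \<and>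
    path_length w (take (Suc (b-a)) (drop a P)) = ddP P b - ddP P a"
proof -
  note A = sp_prefix_suffix[OF assms(1), of a]
  have al: "a < length P" using assms by simp
  have i: "b - a < length (drop a P)" using assms by simp
  have nth: "drop a P ! (b - a) = P ! b" using assms by simp
  note B = sp_prefix_suffix[of "drop a P" "P!a" y "b-a", OF conjunct1[OF conjunct2[OF A[OF al]]] i]
  have dd: "drop (b-a) (drop a P) = drop b P" using assms by simp
  note C = sp_prefix_suffix[OF assms(1) assms(3)]
  show ?thesis using A[OF al] B C nth dd unfolding ddP_def by auto
qed

lemma ddP_0: "sp P x y \<Longrightarrow> ddP P 0 = 0"
  unfolding ddP_def using sp_ne[of P x y] by (cases P) auto

lemma ddP_last: "sp P x y \<Longrightarrow> ddP P (length P - 1) = path_length w P"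
  unfolding ddP_def using sp_ne[of P x y] by simp

lemma ddP_mono: "sp P x y \<Longrightarrow> a \<le> b \<Longrightarrow> b < length P \<Longrightarrow> ddP P a \<le> ddP P b"
  using sp_seg[of P x y a b] pl_nonneg unfolding sp_def by fastforce

lemma ddP_D: "sp P x y \<Longrightarrow> a \<le> b \<Longrightarrow> b < length P \<Longrightarrow> D (P!a) (P!b) = ereal (ddP P b - ddP P a)"
  using sp_seg[of P x y a b] sp_D by metis

lemma sp_edge:
  assumes "sp P x y" "Suc t < length P"
  shows "{P!t, P!Suc t} \<in> E \<and> w {P!t, P!Suc t} = ddP P (Suc t) - ddP P t"
proof -
  note s = sp_seg[OF assms(1), of t "Suc t"]
  have "take (Suc (Suc t - t)) (drop t P) = [P!t, P!Suc t]"
  proof -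
    have "drop t P = P!t # P!Suc t # drop (Suc (Suc t)) P"
      using assms(2) by (metis Cons_nth_drop_Suc Suc_lessD)
    then show ?thesis by simp
  qed
  then show ?thesis using s assms(2) unfolding sp_def by (auto simp: is_path_Cons2)
qed

end


context hier begin

definition Qlev :: "nat \<Rightarrow> nat \<Rightarrow> real \<Rightarrow> bool" where
  "Qlev i T \<epsilon> \<longleftrightarrow> (\<forall>x y P. sp P x y \<longrightarrow> HP T x y ((1+\<epsilon>) * path_length w P) \<or>
      (\<exists>z\<in>A (Suc i). HP T x z (4 * path_length w P)))"

lemma Dset_empty: "Dset u {} = \<infinity>" unfolding Dset_def by (simp add: top_ereal_def)

lemma sp_V: "sp P x y \<Longrightarrow> k < length P \<Longrightarrow> P ! k \<in> V"
  unfolding sp_def is_path_def by (meson nth_mem subsetD)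

lemma sp_xyV: "sp P x y \<Longrightarrow> x \<in> V \<and> y \<in> V"
  unfolding sp_def using is_path_ends by metis

lemma Dset_nonneg: "0 \<le> Dset u S" unfolding Dset_def by (rule INF_greatest) (rule D_nonneg)

lemma real_le_aux: "0 \<le> (X::ereal) \<Longrightarrow> X \<le> ereal L \<Longrightarrow> real_of_ereal X \<le> L"
  by (cases X) auto

lemma Q0: "Qlev 0 1 0"
  unfolding Qlev_def
proof (intro allI impI)
  fix x y P assume sp: "sp P x y"
  define L where "L = path_length w P"
  have DL: "D x y = ereal L" using sp_D[OF sp] L_def by simp
  have L0: "L \<ge> 0" using pl_nonneg sp unfolding sp_def L_def by blast
  have xy: "x \<in> A 0" "y \<in> A 0" using sp_xyV[OF sp] A0 by auto
  show "HP 1 x y ((1 + 0) * L) \<or> (\<exists>z\<in>A (Suc 0). HP 1 x z (4 * L))"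
  proof (cases "D x y < Dset x (A (Suc 0))")
    case True
    have "HP 1 x y (real_of_ereal (D x y))" using bunch_edge[of 0 x y] xy True DL by simp
    then show ?thesis using DL by simp
  next
    case False
    then have le: "Dset x (A (Suc 0)) \<le> ereal L" using DL by simp
    then have ninf: "Dset x (A (Suc 0)) \<noteq> \<infinity>" by auto
    then have ne: "A (Suc 0) \<noteq> {}" using Dset_empty by auto
    then have "0 < m" using Atop by (cases m) auto
    from pivot_edge[OF this xy(1) ne ninf] obtain z where
      z: "z \<in> A (Suc 0)" "HP 1 x z (real_of_ereal (Dset x (A (Suc 0))))" by blast
    have "real_of_ereal (Dset x (A (Suc 0))) \<le> L" using le Dset_nonneg by (intro real_le_aux)
    then have "HP 1 x z (4 * L)" using z(2) L0 by (elim HP_mono) auto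
    then show ?thesis using z(1) by blast
  qed
qed

lemma Qstep:
  assumes Q: "Qlev i T \<epsilon>" and im: "Suc i \<le> m" and T1: "1 \<le> T" and e0: "0 \<le> \<epsilon>" and e1: "\<epsilon> \<le> 1"
    and lv: "16 \<le> lv"
  shows "Qlev (Suc i) (3 * lv * T) (\<epsilon> + 16 / lv)"
  unfolding Qlev_def
proof (intro allI impI)
  fix x y P assume sp: "sp P x y"
  define L where "L = path_length w P"
  define r where "r = length P - 1"
  define dd where "dd = ddP P"
  have Pne: "P \<noteq> []" and P0: "P ! 0 = x" and Pr: "P ! r = y" using sp_ne[OF sp] r_def by auto
  have lenP: "length P = Suc r" using Pne r_def by simp
  have L0: "L \<ge> 0" using pl_nonneg sp unfolding sp_def L_def by blast
  have dd0: "dd 0 = 0" using ddP_0[OF sp] dd_def by simp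
  have ddr: "dd r = L" using ddP_last[OF sp] dd_def L_def r_def by simp
  have ddm: "a \<le> b \<Longrightarrow> b \<le> r \<Longrightarrow> dd a \<le> dd b" for a b using ddP_mono[OF sp] dd_def lenP by simp
  show "HP (3 * lv * T) x y ((1 + (\<epsilon> + 16 / lv)) * L) \<or> (\<exists>z\<in>A (Suc (Suc i)). HP (3 * lv * T) x z (4 * L))"
  proof (cases "r = 0")
    case True
    then have "x = y" using P0 Pr by simp
    moreover have "x \<in> V" using sp_xyV[OF sp] by simp
    moreover have "0 \<le> (1 + (\<epsilon> + 16 / lv)) * L" using L0 e0 by simp
    ultimately have "HP (3 * lv * T) x y ((1 + (\<epsilon> + 16 / lv)) * L)" using HP_refl HP_mono by blast
    then show ?thesis ..
  next
    case False
    have "{P!0, P!Suc 0} \<in> E \<and> w {P!0, P!Suc 0} = ddP P (Suc 0) - ddP P 0"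
      using sp_edge[OF sp, of 0] lenP False by simp
    then have "dd 1 > 0" using w_pos dd0 dd_def by fastforce
    moreover have "dd 1 \<le> L" using ddm[of 1 r] ddr False by simp
    ultimately have Lpos: "L > 0" by simp
    define \<Delta> where "\<Delta> = L / lv"
    have lvpos: "real lv > 0" using lv by simp
    have Dpos: "\<Delta> > 0" using Lpos lvpos \<Delta>_def by simp
    have LD: "L = lv * \<Delta>" using lvpos \<Delta>_def by simp
    obtain s c where sc: "s \<le> 2 * lv + 1" "c 0 = 0" "c s = r"
      "\<And>j. j < s \<Longrightarrow> c j < c (Suc j) \<and> (c (Suc j) = Suc (c j) \<or> dd (c (Suc j)) - dd (c j) \<le> \<Delta>)"
    proof -
      have "\<exists>s c. s \<le> 2 * lv + 1 \<and> c 0 = 0 \<and> c s = r \<and>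
        (\<forall>j<s. c j < c (Suc j) \<and> (c (Suc j) = Suc (c j) \<or> dd (c (Suc j)) - dd (c j) \<le> \<Delta>))"
        by (rule segmentation) (use ddm dd0 Dpos ddr LD in auto)
      then show ?thesis using that by blast
    qed
    have cmono: "j \<le> k \<Longrightarrow> k \<le> s \<Longrightarrow> c j \<le> c k" for j k
    proof (induction k)
      case (Suc k) then show ?case using sc(4)[of k] by (cases "j = Suc k") (auto simp: le_Suc_eq)
    qed simp
    have cr: "j \<le> s \<Longrightarrow> c j \<le> r" for j using cmono[of j s] sc(3) by simp
    define pc where "pc j = P ! (c j)" for j
    have pcV: "j \<le> s \<Longrightarrow> pc j \<in> V" for j
    proof -
      assume "j \<le> s" then have "c j < length P" using cr[of j] lenP by simp
      then show ?thesis using sp_V[OF sp] pc_def by simp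
    qed
    have pc0: "pc 0 = x" using sc(2) P0 pc_def by simp
    have pcs: "pc s = y" using sc(3) Pr pc_def by simp
    define good where "good j \<longleftrightarrow> HP T (pc j) (pc (Suc j)) ((1+\<epsilon>) * (dd (c (Suc j)) - dd (c j)))" for j
    have seg: "\<exists>Q. sp Q (pc j) (pc (Suc j)) \<and> path_length w Q = dd (c (Suc j)) - dd (c j)" if "j < s" for j
      using sp_seg[OF sp, of "c j" "c (Suc j)"] sc(4)[OF that] cr[of "Suc j"] that lenP pc_def dd_def
      by (metis Suc_leI less_Suc_eq_le less_imp_le)
    have edge_good: "good j" if "j < s" "c (Suc j) = Suc (c j)" for j
    proof -
      have "Suc (c j) < length P" using cr[of "Suc j"] that lenP by simp
      note e = sp_edge[OF sp this]
      have "{pc j, pc (Suc j)} \<in> E" using e that pc_def by simp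
      then have "HP 1 (pc j) (pc (Suc j)) (w {pc j, pc (Suc j)})" by (rule HP_E)
      moreover have "w {pc j, pc (Suc j)} = dd (c (Suc j)) - dd (c j)" using e that pc_def dd_def by simp
      moreover have "w {pc j, pc (Suc j)} > 0" using w_pos \<open>{pc j, pc (Suc j)} \<in> E\<close> by blast
      ultimately have h: "HP 1 (pc j) (pc (Suc j)) (w {pc j, pc (Suc j)})"
        and W: "w {pc j, pc (Suc j)} = dd (c (Suc j)) - dd (c j)" and Wp: "w {pc j, pc (Suc j)} > 0" by auto
      have "w {pc j, pc (Suc j)} \<le> (1+\<epsilon>) * (dd (c (Suc j)) - dd (c j))"
        unfolding W[symmetric] using Wp e0 by (simp add: algebra_simps)
      then show ?thesis unfolding good_def using HP_mono[OF h T1] by simp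
    qed
    have bad: "(\<exists>z\<in>A (Suc i). HP T (pc j) z (4 * \<Delta>)) \<and> (\<exists>z\<in>A (Suc i). HP T (pc (Suc j)) z (4 * \<Delta>))"
      if js: "j < s" and ng: "\<not> good j" for j
    proof -
      have short: "dd (c (Suc j)) - dd (c j) \<le> \<Delta>" using sc(4)[OF js] edge_good js ng by blast
      obtain Qp where Qp: "sp Qp (pc j) (pc (Suc j))" "path_length w Qp = dd (c (Suc j)) - dd (c j)"
        using seg[OF js] by blast
      have q1: "\<exists>z\<in>A (Suc i). HP T (pc j) z (4 * \<Delta>)"
      proof -
        have "\<not> HP T (pc j) (pc (Suc j)) ((1+\<epsilon>) * path_length w Qp)" using ng Qp good_def by simp
        then obtain z where "z \<in> A (Suc i)" "HP T (pc j) z (4 * path_length w Qp)"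
          using Q Qp(1) unfolding Qlev_def by blast
        then show ?thesis using short Qp(2) by (intro bexI[of _ z]) (auto elim: HP_mono)
      qed
      have q2: "\<exists>z\<in>A (Suc i). HP T (pc (Suc j)) z (4 * \<Delta>)"
      proof -
        have sr: "sp (rev Qp) (pc (Suc j)) (pc j)" using sp_rev[OF Qp(1)] .
        have lr: "path_length w (rev Qp) = path_length w Qp" using path_rev[of V E Qp "pc j" "pc (Suc j)" w] Qp(1) unfolding sp_def by blast
        have "\<not> HP T (pc (Suc j)) (pc j) ((1+\<epsilon>) * path_length w (rev Qp))"
        proof
          assume "HP T (pc (Suc j)) (pc j) ((1+\<epsilon>) * path_length w (rev Qp))"
          then have "HP T (pc j) (pc (Suc j)) ((1+\<epsilon>) * path_length w Qp)" using HP_sym lr by simp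
          then show False using ng Qp(2) good_def by simp
        qed
        then obtain z where "z \<in> A (Suc i)" "HP T (pc (Suc j)) z (4 * path_length w (rev Qp))"
          using Q sr unfolding Qlev_def by blast
        then show ?thesis using short Qp(2) lr by (intro bexI[of _ z]) (auto elim: HP_mono)
      qed
      from q1 q2 show ?thesis ..
    qed
    have chain: "HP ((t' - t) * T) (pc t) (pc t') ((1+\<epsilon>) * (dd (c t') - dd (c t)))"
      if "t \<le> t'" "t' \<le> s" "\<forall>j. t \<le> j \<and> j < t' \<longrightarrow> good j" for t t'
      using that
    proof (induction t')
      case 0
      then show ?case using HP_refl pcV by simp
    next
      case (Suc t')
      show ?case
      proof (cases "t = Suc t'")
        case True then show ?thesis using HP_refl pcV Suc.prems by simp
      next
        case False
        then have tt: "t \<le> t'" using Suc.prems by simp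
        have ih: "HP ((t' - t) * T) (pc t) (pc t') ((1+\<epsilon>) * (dd (c t') - dd (c t)))"
          using Suc tt by simp
        have g: "good t'" using Suc.prems tt by simp
        have "HP ((t' - t) * T + T) (pc t) (pc (Suc t'))
            ((1+\<epsilon>) * (dd (c t') - dd (c t)) + (1+\<epsilon>) * (dd (c (Suc t')) - dd (c t')))"
          using HP_concat[OF ih g[unfolded good_def]] .
        moreover have "(t' - t) * T + T = (Suc t' - t) * T" using tt by (simp add: Suc_diff_le)
        moreover have "(1+\<epsilon>) * (dd (c t') - dd (c t)) + (1+\<epsilon>) * (dd (c (Suc t')) - dd (c t'))
          = (1+\<epsilon>) * (dd (c (Suc t')) - dd (c t))" by (simp add: algebra_simps)
        ultimately show ?thesis by simp
      qed
    qed
    have dcs: "dd (c s) = L" using sc(3) ddr by simp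
    have dc0: "dd (c 0) = 0" using sc(2) dd0 by simp
    show ?thesis
    proof (cases "\<forall>j<s. good j")
      case True
      have "HP ((s - 0) * T) (pc 0) (pc s) ((1+\<epsilon>) * (dd (c s) - dd (c 0)))"
        using chain[of 0 s] True by simp
      then have h: "HP (s * T) x y ((1+\<epsilon>) * L)" using pc0 pcs dcs dc0 by simp
      have "s * T \<le> 3 * lv * T" using sc(1) lv by (intro mult_le_mono1) simp
      moreover have "(1+\<epsilon>) * L \<le> (1 + (\<epsilon> + 16 / lv)) * L" using L0 lvpos by (simp add: algebra_simps)
      ultimately show ?thesis using h by (blast intro: HP_mono)
    next
      case False
      define F where "F = {j. j < s \<and> \<not> good j}"
      have Fne: "F \<noteq> {}" and Ffin: "finite F" using False F_def by auto
      define f where "f = Min F"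
      define g where "g = Max F"
      have fF: "f \<in> F" and gF: "g \<in> F" using Fne Ffin f_def g_def by auto
      have fg: "f \<le> g" using Fne Ffin f_def g_def by (simp add: Min_le_iff gF)
      have gs: "g < s" using gF F_def by simp
      have before: "\<forall>j. 0 \<le> j \<and> j < f \<longrightarrow> good j"
      proof (intro allI impI)
        fix j assume j: "0 \<le> j \<and> j < f"
        show "good j"
        proof (rule ccontr)
          assume "\<not> good j"
          then have "j \<in> F" using j fg gs F_def by simp
          then have "f \<le> j" using Ffin f_def by simp
          then show False using j by simp
        qed
      qed
      have after: "\<forall>j. Suc g \<le> j \<and> j < s \<longrightarrow> good j"
      proof (intro allI impI)
        fix j assume j: "Suc g \<le> j \<and> j < s"
        show "good j"
        proof (rule ccontr)
          assume "\<not> good j"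
          then have "j \<in> F" using j F_def by simp
          then have "j \<le> g" using Ffin g_def by simp
          then show False using j by simp
        qed
      qed
      obtain z1 where z1: "z1 \<in> A (Suc i)" "HP T (pc f) z1 (4 * \<Delta>)" using bad[of f] fF F_def by blast
      obtain z2 where z2: "z2 \<in> A (Suc i)" "HP T (pc (Suc g)) z2 (4 * \<Delta>)" using bad[of g] gF F_def by blast
      define a where "a = c f"
      define b where "b = c (Suc g)"
      have ab: "a \<le> b" using cmono[of f "Suc g"] fg gs a_def b_def by simp
      have br: "b \<le> r" using cr[of "Suc g"] gs b_def by simp
      have pre: "HP (f * T) x (pc f) ((1+\<epsilon>) * dd a)"
        using chain[of 0 f] before fg gs pc0 dc0 a_def by simp
      have suf: "HP ((s - Suc g) * T) (pc (Suc g)) y ((1+\<epsilon>) * (L - dd b))"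
        using chain[of "Suc g" s] after gs pcs dcs b_def by simp
      have Dab: "D (pc f) (pc (Suc g)) = ereal (dd b - dd a)"
        using ddP_D[OF sp ab] br lenP a_def b_def pc_def dd_def by simp
      have D1: "D z1 (pc f) \<le> ereal (4 * \<Delta>)" using HP_lower[OF HP_sym[OF z1(2)]] .
      have D2: "D (pc (Suc g)) z2 \<le> ereal (4 * \<Delta>)" using HP_lower[OF z2(2)] .
      have "D z1 z2 \<le> D z1 (pc f) + D (pc f) z2" by (rule D_triangle)
      also have "\<dots> \<le> D z1 (pc f) + (D (pc f) (pc (Suc g)) + D (pc (Suc g)) z2)"
        by (intro add_left_mono D_triangle)
      also have "\<dots> \<le> ereal (4 * \<Delta>) + (ereal (dd b - dd a) + ereal (4 * \<Delta>))"
        using D1 D2 Dab by (intro add_mono) auto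
      finally have Dz: "D z1 z2 \<le> ereal (8 * \<Delta> + dd b - dd a)" by (simp add: algebra_simps)
      then have Dzf: "D z1 z2 \<noteq> \<infinity>" by auto
      define R where "R = real_of_ereal (D z1 z2)"
      have DR: "D z1 z2 = ereal R" using D_real[OF Dzf] R_def by simp
      have Rle: "R \<le> 8 * \<Delta> + dd b - dd a" using Dz DR by simp
      have da0: "dd a \<ge> 0" using ddm[of 0 a] dd0 ab br by simp
      have dbL: "dd b \<le> L" using ddm[of b r] br ddr by simp
      have dab: "dd a \<le> dd b" using ddm ab br by simp
      show ?thesis
      proof (cases "D z1 z2 < Dset z1 (A (Suc (Suc i)))")
        case True
        have e12: "HP 1 z1 z2 R" using bunch_edge[OF im z1(1) z2(1) Dzf True] R_def by simp
        have "HP (f * T + T + 1 + T + (s - Suc g) * T) x y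
           ((1+\<epsilon>) * dd a + 4 * \<Delta> + R + 4 * \<Delta> + (1+\<epsilon>) * (L - dd b))"
          using HP_concat[OF HP_concat[OF HP_concat[OF HP_concat[OF pre z1(2)] e12] HP_sym[OF z2(2)]] suf] .
        moreover have "f * T + T + 1 + T + (s - Suc g) * T \<le> 3 * lv * T"
        proof -
          have "f * T + T + 1 + T + (s - Suc g) * T = (f + 2 + (s - Suc g)) * T + 1" by (simp add: algebra_simps)
          moreover have "f + 2 + (s - Suc g) \<le> 2 * lv + 2" using fg gs sc(1) by simp
          then have "(f + 2 + (s - Suc g)) * T \<le> (2 * lv + 2) * T" by (rule mult_le_mono1)
          moreover have "(2 * lv + 2) * T + 1 \<le> (2 * lv + 3) * T" using T1 by (simp add: algebra_simps)
          moreover have "(2 * lv + 3) * T \<le> 3 * lv * T" using lv by (intro mult_le_mono1) simp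
          ultimately show ?thesis by linarith
        qed
        moreover have "(1+\<epsilon>) * dd a + 4 * \<Delta> + R + 4 * \<Delta> + (1+\<epsilon>) * (L - dd b) \<le> (1 + (\<epsilon> + 16 / lv)) * L"
        proof -
          have "\<epsilon> * (dd b - dd a) \<ge> 0" using e0 dab by simp
          moreover have "16 / lv * L = 16 * \<Delta>" using \<Delta>_def by simp
          ultimately show ?thesis using Rle by (simp add: algebra_simps)
        qed
        ultimately show ?thesis by (blast intro: HP_mono)
      next
        case False
        then have le: "Dset z1 (A (Suc (Suc i))) \<le> ereal R" using DR by simp
        then have ninf: "Dset z1 (A (Suc (Suc i))) \<noteq> \<infinity>" by auto
        then have ne: "A (Suc (Suc i)) \<noteq> {}" using Dset_empty by auto
        then have im2: "Suc i < m" using Atop im by (metis le_neq_implies_less)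
        from pivot_edge[OF im2 z1(1) ne ninf] obtain z3 where
          z3: "z3 \<in> A (Suc (Suc i))" "HP 1 z1 z3 (real_of_ereal (Dset z1 (A (Suc (Suc i)))))" by blast
        have R0: "R \<ge> 0" using DR D_nonneg[of z1 z2] by simp
        have "real_of_ereal (Dset z1 (A (Suc (Suc i)))) \<le> R" using le Dset_nonneg by (intro real_le_aux)
        then have e13: "HP 1 z1 z3 R" using z3(2) by (elim HP_mono) auto
        have "HP (f * T + T + 1) x z3 ((1+\<epsilon>) * dd a + 4 * \<Delta> + R)"
          using HP_concat[OF HP_concat[OF pre z1(2)] e13] .
        moreover have "f * T + T + 1 \<le> 3 * lv * T"
        proof -
          have "f * T + T + 1 = (f + 1) * T + 1" by simp
          moreover have "f + 1 \<le> 2 * lv + 1" using fg gs sc(1) by simp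
          then have "(f + 1) * T \<le> (2 * lv + 1) * T" by (rule mult_le_mono1)
          moreover have "(2 * lv + 1) * T + 1 \<le> (2 * lv + 2) * T" using T1 by (simp add: algebra_simps)
          moreover have "(2 * lv + 2) * T \<le> 3 * lv * T" using lv by (intro mult_le_mono1) simp
          ultimately show ?thesis by linarith
        qed
        moreover have "(1+\<epsilon>) * dd a + 4 * \<Delta> + R \<le> 4 * L"
        proof -
          have "\<epsilon> * dd a \<le> 1 * dd a" using e1 da0 by (intro mult_right_mono)
          moreover have "12 * \<Delta> \<le> L" using LD lv Dpos by (simp add: mult_right_mono)
          moreover have "(1+\<epsilon>) * dd a = dd a + \<epsilon> * dd a" by (simp add: algebra_simps)
          ultimately show ?thesis using Rle dab dbL L0 by linarith
        qed
        ultimately show ?thesis using z3(1) by (blast intro: HP_mono)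
      qed
    qed
  qed
qed

end


context hier begin

lemma Qall:
  assumes lv: "16 \<le> lv" "16 * m \<le> lv"
  shows "i \<le> m \<Longrightarrow> Qlev i ((3*lv)^i) (16 * i / lv)"
proof (induction i)
  case 0 then show ?case using Q0 by simp
next
  case (Suc i)
  have T1: "1 \<le> (3*lv)^i" using lv by simp
  have "real (16 * i) \<le> real lv" using Suc.prems lv by simp
  then have e1: "16 * i / lv \<le> (1::real)" using lv by (simp add: divide_le_eq)
  have "Qlev (Suc i) (3 * lv * (3*lv)^i) (16 * i / lv + 16 / lv)"
    by (rule Qstep) (use Suc T1 e1 lv in auto)
  moreover have "(16 * i / lv + 16 / lv :: real) = 16 * Suc i / lv" by (simp add: add_divide_distrib algebra_simps)
  ultimately show ?case by simp
qed

lemma H_w_lower: "{a,b} \<in> H \<Longrightarrow> D a b \<le> ereal (wD {a,b})"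
proof -
  assume hab: "{a,b} \<in> H"
  obtain u v where "{a,b} = {u,v}" "D u v \<noteq> \<infinity>" using H_props[OF hab] by blast
  then have "D a b \<noteq> \<infinity>" using D_sym[of u v] unfolding doubleton_eq_iff by auto
  then show ?thesis using wD_eq D_real by simp
qed

lemma hopset:
  assumes lv: "16 \<le> lv" "16 * m \<le> lv" and eps: "16 * m / lv \<le> \<epsilon>" and beta: "real ((3*lv)^m) \<le> \<beta>"
  shows "is_hopset V E w H wD \<beta> \<epsilon>"
  unfolding is_hopset_def
proof (intro conjI ballI allI impI)
  show "e \<subseteq> V" "card e = 2" if "e \<in> H" for e using H_sub that by auto
  show "D u v \<le> ereal (wD {u, v})" if "{u,v} \<in> H" for u v using H_w_lower that .
  fix u v assume uv: "u \<in> V" "v \<in> V"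
  show "D u v \<le> hop_dist V (E \<union> H) uw \<beta> u v"
    unfolding hop_dist_def by (rule INF_greatest) (use path_lower in auto)
  have e0: "\<epsilon> \<ge> 0" using eps order_trans[OF _ eps] by (metis divide_nonneg_nonneg of_nat_0_le_iff)
  show "hop_dist V (E \<union> H) uw \<beta> u v \<le> ereal (1 + \<epsilon>) * D u v"
  proof (cases "D u v = \<infinity>")
    case True
    then show ?thesis using e0 by simp
  next
    case False
    then obtain P where sp: "sp P u v" using D_cases by blast
    have "Qlev m ((3*lv)^m) (16 * m / lv)" using Qall lv by simp
    then have "HP ((3*lv)^m) u v ((1 + 16 * m / lv) * path_length w P)"
      using sp Atop unfolding Qlev_def by blast
    then obtain xs where xs: "is_path V (E \<union> H) xs u v" "path_hops xs \<le> (3*lv)^m"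
      "path_length uw xs \<le> (1 + 16 * m / lv) * path_length w P" unfolding HP_def by blast
    have L0: "path_length w P \<ge> 0" using pl_nonneg sp unfolding sp_def by blast
    have "real (path_hops xs) \<le> real ((3*lv)^m)" using xs(2) by (simp only: of_nat_le_iff)
    then have hb: "real (path_hops xs) \<le> \<beta>" using beta by linarith
    have "hop_dist V (E \<union> H) uw \<beta> u v \<le> ereal (path_length uw xs)"
      unfolding hop_dist_def using xs(1) hb by (intro INF_lower) auto
    also have "\<dots> \<le> ereal ((1 + \<epsilon>) * path_length w P)"
      using xs(3) eps L0 by (simp add: order_trans[OF _ mult_right_mono])
    also have "\<dots> = ereal (1 + \<epsilon>) * D u v" using sp_D[OF sp] by simp
    finally show ?thesis .
  qed
qed

end


lemma chain_sum:
  fixes f :: "nat \<Rightarrow> real" and g :: "'a \<Rightarrow> 'b::linorder"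
  assumes anti: "\<And>a b. a \<le> b \<Longrightarrow> f b \<le> f a"
  shows "finite X \<Longrightarrow> (\<Sum>v\<in>X. f (card {w\<in>X. g w \<le> g v})) \<le> (\<Sum>j<card X. f (Suc j))"
proof (induction "card X" arbitrary: X)
  case 0 then show ?case by simp
next
  case (Suc n X)
  then have ne: "X \<noteq> {}" by auto
  have "Max (g ` X) \<in> g ` X" using Suc.prems ne by (intro Max_in) auto
  then obtain v0 where v0: "v0 \<in> X" "g v0 = Max (g ` X)" by auto
  have v0max: "g w \<le> g v0" if "w \<in> X" for w using v0 Suc.prems that by simp
  define X' where "X' = X - {v0}"
  have fX': "finite X'" using Suc.prems X'_def by simp
  have cX': "n = card X'" using Suc.hyps(2) v0 X'_def Suc.prems by simp
  have "{w\<in>X. g w \<le> g v0} = X" using v0max by blast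
  then have c0: "card {w\<in>X. g w \<le> g v0} = card X" by simp
  have "(\<Sum>v\<in>X. f (card {w\<in>X. g w \<le> g v})) = f (card X) + (\<Sum>v\<in>X'. f (card {w\<in>X. g w \<le> g v}))"
    using Suc.prems v0 c0 X'_def by (simp add: sum.remove)
  also have "(\<Sum>v\<in>X'. f (card {w\<in>X. g w \<le> g v})) \<le> (\<Sum>v\<in>X'. f (card {w\<in>X'. g w \<le> g v}))"
  proof (rule sum_mono)
    fix v assume "v \<in> X'"
    have "card {w\<in>X'. g w \<le> g v} \<le> card {w\<in>X. g w \<le> g v}"
      using Suc.prems X'_def by (intro card_mono) auto
    then show "f (card {w\<in>X. g w \<le> g v}) \<le> f (card {w\<in>X'. g w \<le> g v})" by (rule anti)
  qed
  also have "\<dots> \<le> (\<Sum>j<card X'. f (Suc j))" using Suc.hyps(1)[OF cX' fX'] .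
  also have "f (card X) + (\<Sum>j<card X'. f (Suc j)) = (\<Sum>j<card X. f (Suc j))"
  proof -
    have "card X = Suc (card X')" using cX' Suc.hyps(2) by simp
    then show ?thesis by (simp add: add.commute)
  qed
  finally show ?case by simp
qed

lemma card_filter_real: "finite A \<Longrightarrow> real (card {x\<in>A. P x}) = (\<Sum>x\<in>A. if P x then 1 else 0)"
proof -
  assume "finite A"
  have "real (card {x\<in>A. P x}) = (\<Sum>x\<in>{x\<in>A. P x}. 1)" by simp
  also have "\<dots> = (\<Sum>x\<in>A. if P x then 1 else 0)" using \<open>finite A\<close> by (rule sum.inter_filter)
  finally show ?thesis .
qed

lemma hockey: "(\<Sum>j<m. real ((m - Suc j) choose s)) = real (m choose Suc s)"
proof -
  have "(\<Sum>j<m. real ((m - Suc j) choose s)) = (\<Sum>j<m. real (j choose s))"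
    by (rule sum.nat_diff_reindex)
  also have "\<dots> = real (m choose Suc s)"
  proof (cases m)
    case 0 then show ?thesis by simp
  next
    case (Suc n)
    have "(\<Sum>j<m. j choose s) = (\<Sum>j\<le>n. j choose s)" using Suc lessThan_Suc_atMost by simp
    also have "\<dots> = m choose Suc s" using sum_choose_upper Suc by simp
    finally show ?thesis by (metis of_nat_sum)
  qed
  finally show ?thesis .
qed

lemma averaging:
  fixes g :: "'a \<Rightarrow> 'a \<Rightarrow> 'b::linorder"
  assumes fin: "finite X" and sm: "s \<le> card X"
  shows "\<exists>S. S \<subseteq> X \<and> card S = s \<and>
    real (\<Sum>u\<in>X. card {v\<in>X. \<forall>w\<in>S. g u v < g u w}) \<le> real (card X) * (card X - s) / (s + 1)"
proof (rule ccontr)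
  define m where "m = card X"
  define F where "F = {S. S \<subseteq> X \<and> card S = s}"
  define bs where "bs S = (\<Sum>u\<in>X. card {v\<in>X. \<forall>w\<in>S. g u v < g u w})" for S
  define avg where "avg = real m * (m - s) / (s + 1)"
  assume "\<not> ?thesis"
  then have big: "S \<in> F \<Longrightarrow> avg < real (bs S)" for S unfolding F_def bs_def avg_def m_def by force
  have finF: "finite F" unfolding F_def using fin by simp
  have cF: "card F = m choose s" unfolding F_def m_def using n_subsets[OF fin] by simp
  have cFpos: "card F > 0" using cF sm m_def by simp
  
  have swap: "(\<Sum>S\<in>F. real (bs S)) = (\<Sum>u\<in>X. \<Sum>v\<in>X. real (card {S\<in>F. \<forall>w\<in>S. g u v < g u w}))"
  proof -
    have "(\<Sum>S\<in>F. real (bs S)) = (\<Sum>S\<in>F. \<Sum>u\<in>X. \<Sum>v\<in>X. (if \<forall>w\<in>S. g u v < g u w then 1 else 0))"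
      unfolding bs_def of_nat_sum using card_filter_real[OF fin] by simp
    also have "\<dots> = (\<Sum>u\<in>X. \<Sum>v\<in>X. \<Sum>S\<in>F. (if \<forall>w\<in>S. g u v < g u w then 1 else 0))"
    proof -
      have "(\<Sum>S\<in>F. \<Sum>u\<in>X. \<Sum>v\<in>X. (if \<forall>w\<in>S. g u v < g u w then 1 else 0::real))
          = (\<Sum>u\<in>X. \<Sum>S\<in>F. \<Sum>v\<in>X. (if \<forall>w\<in>S. g u v < g u w then 1 else 0))"
        by (rule sum.swap)
      also have "\<dots> = (\<Sum>u\<in>X. \<Sum>v\<in>X. \<Sum>S\<in>F. (if \<forall>w\<in>S. g u v < g u w then 1 else 0))"
        by (rule sum.cong[OF refl], rule sum.swap)
      finally show ?thesis .
    qed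
    also have "\<dots> = (\<Sum>u\<in>X. \<Sum>v\<in>X. real (card {S\<in>F. \<forall>w\<in>S. g u v < g u w}))"
      using card_filter_real[OF finF] by simp
    finally show ?thesis .
  qed
  have inner: "(\<Sum>v\<in>X. real (card {S\<in>F. \<forall>w\<in>S. g u v < g u w})) \<le> real (m choose Suc s)" for u
  proof -
    have eq: "card {S\<in>F. \<forall>w\<in>S. g u v < g u w} = (m - card {w\<in>X. g u w \<le> g u v}) choose s" if "v \<in> X" for v
    proof -
      define Y where "Y = {w\<in>X. g u w \<le> g u v}"
      have "{S\<in>F. \<forall>w\<in>S. g u v < g u w} = {S. S \<subseteq> X - Y \<and> card S = s}"
        unfolding F_def Y_def by (auto simp: not_le)
      moreover have "card (X - Y) = m - card Y" unfolding m_def Y_def using fin by (simp add: card_Diff_subset)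
      ultimately show ?thesis using n_subsets[of "X - Y" s] fin Y_def by simp
    qed
    have "(\<Sum>v\<in>X. real (card {S\<in>F. \<forall>w\<in>S. g u v < g u w})) =
          (\<Sum>v\<in>X. real ((m - card {w\<in>X. g u w \<le> g u v}) choose s))"
      using eq by simp
    also have "\<dots> \<le> (\<Sum>j<card X. real ((m - Suc j) choose s))"
      by (rule chain_sum[OF _ fin]) (simp add: binomial_right_mono)
    also have "\<dots> = real (m choose Suc s)" using hockey m_def by simp
    finally show ?thesis .
  qed
  have "(\<Sum>S\<in>F. real (bs S)) \<le> real m * real (m choose Suc s)"
    using swap sum_mono[of X, OF inner] m_def by simp
  moreover have "real (card F) * avg < (\<Sum>S\<in>F. real (bs S))"
  proof -
    have "(\<Sum>S\<in>F. avg) < (\<Sum>S\<in>F. real (bs S))" using big finF cFpos by (intro sum_strict_mono) auto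
    then show ?thesis by simp
  qed
  moreover have "real (card F) * avg = real m * real (m choose Suc s)"
  proof -
    have "Suc s * (m choose Suc s) = (m - s) * (m choose s)"
      using binomial_absorption[of s m] binomial_absorb_comp[of m s] by simp
    then have "real (s + 1) * real (m choose Suc s) = real (m - s) * real (m choose s)"
      by (metis of_nat_mult Suc_eq_plus1)
    then have b: "real (m choose Suc s) = real (m - s) * real (m choose s) / real (s + 1)"
      by (simp add: field_simps)
    have ms: "real (m - s) = real m - real s" using sm m_def by (simp add: of_nat_diff)
    show ?thesis unfolding avg_def cF b ms by (simp add: field_simps)
  qed
  ultimately show False by linarith
qed


context hier begin

definition "Bn i u = {v\<in>A i. D u v < Dset u (A (Suc i))}"

lemma Bn_eq: "A (Suc i) \<noteq> {} \<Longrightarrow> Bn i u = {v\<in>A i. \<forall>w\<in>A (Suc i). D u v < D u w}"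
proof -
  assume ne: "A (Suc i) \<noteq> {}"
  have "Dset u (A (Suc i)) = Min (D u ` A (Suc i))" unfolding Dset_def using ne A_fin by (simp add: Min_Inf)
  then show ?thesis unfolding Bn_def using ne A_fin by (auto simp: Min_gr_iff)
qed

lemma card_Hb: "card Hb \<le> (\<Sum>i\<le>m. \<Sum>u\<in>A i. card (Bn i u))"
proof -
  have sub: "Hb \<subseteq> (\<Union>i\<in>{..m}. (\<lambda>p. {fst p, snd p}) ` (SIGMA u:A i. Bn i u))"
  proof
    fix e assume "e \<in> Hb"
    then obtain u v i where e: "e = {u,v}" "i \<le> m" "u \<in> A i" "v \<in> A i" "D u v < Dset u (A (Suc i))"
      unfolding Hb_def by blast
    then have "(u,v) \<in> (SIGMA u:A i. Bn i u)" unfolding Bn_def by simp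
    then have "e \<in> (\<lambda>p. {fst p, snd p}) ` (SIGMA u:A i. Bn i u)" using e(1) by force
    then show "e \<in> (\<Union>i\<in>{..m}. (\<lambda>p. {fst p, snd p}) ` (SIGMA u:A i. Bn i u))" using e(2) by blast
  qed
  have finB: "finite (Bn i u)" for i u unfolding Bn_def using A_fin by simp
  have "card Hb \<le> card (\<Union>i\<in>{..m}. (\<lambda>p. {fst p, snd p}) ` (SIGMA u:A i. Bn i u))"
    using sub by (rule card_mono[rotated]) (use A_fin finB in auto)
  also have "\<dots> \<le> (\<Sum>i\<le>m. card ((\<lambda>p. {fst p, snd p}) ` (SIGMA u:A i. Bn i u)))"
    by (rule card_UN_le) simp
  also have "\<dots> \<le> (\<Sum>i\<le>m. card (SIGMA u:A i. Bn i u))"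
    by (intro sum_mono card_image_le) (use A_fin finB in auto)
  also have "\<dots> = (\<Sum>i\<le>m. \<Sum>u\<in>A i. card (Bn i u))"
    by (intro sum.cong refl card_SigmaI) (use A_fin finB in auto)
  finally show ?thesis .
qed

lemma card_Hp: "card Hp \<le> (\<Sum>i<m. card (A i))"
proof -
  have sub: "Hp \<subseteq> (\<Union>i\<in>{..<m}. (\<lambda>u. {u, piv i u}) ` A i)"
  proof
    fix e assume "e \<in> Hp"
    then obtain u i where e: "e = {u, piv i u}" "i < m" "u \<in> A i"
      unfolding Hp_def by blast
    then show "e \<in> (\<Union>i\<in>{..<m}. (\<lambda>u. {u, piv i u}) ` A i)" by blast
  qed
  have "card Hp \<le> card (\<Union>i\<in>{..<m}. (\<lambda>u. {u, piv i u}) ` A i)"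
    using sub by (rule card_mono[rotated]) (use A_fin in auto)
  also have "\<dots> \<le> (\<Sum>i<m. card ((\<lambda>u. {u, piv i u}) ` A i))" by (rule card_UN_le) simp
  also have "\<dots> \<le> (\<Sum>i<m. card (A i))" by (intro sum_mono card_image_le) (use A_fin in auto)
  finally show ?thesis .
qed

lemma card_H_bound:
  assumes ne: "\<And>i. i \<le> m \<Longrightarrow> A i \<noteq> {}"
    and avg: "\<And>i. i < m \<Longrightarrow> real (\<Sum>u\<in>A i. card {v\<in>A i. \<forall>w\<in>A (Suc i). D u v < D u w})
        \<le> real (card (A i)) * (card (A i) - card (A (Suc i))) / (card (A (Suc i)) + 1)"
  shows "real (card H) \<le> (\<Sum>i<m. 2 * real (card (A i))^2 / real (card (A (Suc i)))) + real (card (A m))^2"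
proof -
  have "card H \<le> card Hb + card Hp" unfolding H_def by (rule card_Un_le)
  also have "\<dots> \<le> (\<Sum>i\<le>m. \<Sum>u\<in>A i. card (Bn i u)) + (\<Sum>i<m. card (A i))"
    using card_Hb card_Hp by (rule add_mono)
  also have "\<dots> = (\<Sum>i<m. (\<Sum>u\<in>A i. card (Bn i u)) + card (A i)) + (\<Sum>u\<in>A m. card (Bn m u))"
    by (simp add: sum.distrib lessThan_Suc_atMost[symmetric])
  finally have c0: "card H \<le> (\<Sum>i<m. (\<Sum>u\<in>A i. card (Bn i u)) + card (A i)) + (\<Sum>u\<in>A m. card (Bn m u))" .
  have c: "real (card H) \<le> (\<Sum>i<m. real (\<Sum>u\<in>A i. card (Bn i u)) + real (card (A i))) + real (\<Sum>u\<in>A m. card (Bn m u))"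
    using of_nat_mono[OF c0, where 'a=real] unfolding of_nat_add of_nat_sum[of _ "{..<m}"] by simp
  have lev: "real (\<Sum>u\<in>A i. card (Bn i u)) + real (card (A i)) \<le> 2 * real (card (A i))^2 / real (card (A (Suc i)))"
    if i: "i < m" for i
  proof -
    define a where "a = real (card (A i))"
    define b where "b = real (card (A (Suc i)))"
    have b1: "b \<ge> 1" using ne[of "Suc i"] i A_fin b_def by (simp add: Suc_leI card_gt_0_iff)
    have ba: "b \<le> a" unfolding a_def b_def using Amono A_fin by (simp add: card_mono)
    have "real (\<Sum>u\<in>A i. card (Bn i u)) \<le> a * (a - b) / (b + 1)"
      using avg[OF i] Bn_eq[OF ne[of "Suc i"]] i a_def b_def A_fin Amono by (simp add: card_mono of_nat_diff add.commute)
    also have "\<dots> \<le> a * a / b"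
    proof -
      have "a * (a - b) \<le> a * a" using b1 ba by (simp add: algebra_simps)
      then have "a * (a - b) / (b + 1) \<le> a * a / (b + 1)" using b1 by (simp add: divide_right_mono)
      also have "\<dots> \<le> a * a / b" using b1 by (intro divide_left_mono) auto
      finally show ?thesis .
    qed
    finally have 1: "real (\<Sum>u\<in>A i. card (Bn i u)) \<le> a * a / b" .
    have 2: "a \<le> a * a / b" using b1 ba by (simp add: le_divide_eq mult_left_mono)
    show ?thesis using 1 2 unfolding a_def[symmetric] b_def[symmetric] by (simp add: power2_eq_square)
  qed
  have top: "real (\<Sum>u\<in>A m. card (Bn m u)) \<le> real (card (A m))^2"
  proof -
    have "(\<Sum>u\<in>A m. card (Bn m u)) \<le> (\<Sum>u\<in>A m. card (A m))"
      by (intro sum_mono card_mono) (auto simp: Bn_def A_fin)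
    then have "(\<Sum>u\<in>A m. card (Bn m u)) \<le> card (A m) ^ 2" by (simp add: power2_eq_square)
    then have "real (\<Sum>u\<in>A m. card (Bn m u)) \<le> real (card (A m) ^ 2)" by (simp only: of_nat_le_iff)
    then show ?thesis by simp
  qed
  have "(\<Sum>i<m. real (\<Sum>u\<in>A i. card (Bn i u)) + real (card (A i))) \<le> (\<Sum>i<m. 2 * real (card (A i))^2 / real (card (A (Suc i))))"
    by (rule sum_mono) (use lev in simp)
  then show ?thesis using c top by linarith
qed

end


fun mkA :: "(nat \<Rightarrow> 'a set \<Rightarrow> 'a set) \<Rightarrow> 'a set \<Rightarrow> nat \<Rightarrow> nat \<Rightarrow> 'a set" where
  "mkA ch V0 m 0 = V0"
| "mkA ch V0 m (Suc i) = (if i < m then ch (Suc i) (mkA ch V0 m i) else {})"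

context wgraph begin

lemma construct:
  assumes sz0: "sz 0 = card V" and szm: "\<And>i. i < m \<Longrightarrow> sz (Suc i) \<le> sz i" and sz1: "\<And>i. i \<le> m \<Longrightarrow> 1 \<le> sz i"
  shows "\<exists>H. real (card H) \<le> (\<Sum>i<m. 2 * real (sz i)^2 / real (sz (Suc i))) + real (sz m)^2 \<and>
    (\<forall>lv \<epsilon> \<beta>. 16 \<le> lv \<longrightarrow> 16 * m \<le> lv \<longrightarrow> 16 * m / lv \<le> \<epsilon> \<longrightarrow> real ((3*lv)^m) \<le> \<beta> \<longrightarrow>
       is_hopset V E w H wD \<beta> \<epsilon>)"
proof -
  define good where "good X S s \<longleftrightarrow> S \<subseteq> X \<and> card S = s \<and>
    real (\<Sum>u\<in>X. card {v\<in>X. \<forall>w\<in>S. D u v < D u w}) \<le> real (card X) * (card X - s) / (s + 1)" for X S s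
  define ch where "ch j X = (SOME S. good X S (sz j))" for j X
  define A where "A = mkA ch V m"
  have ch_good: "good X (ch j X) (sz j)" if "finite X" "sz j \<le> card X" for X j
  proof -
    have "\<exists>S. good X S (sz j)" unfolding good_def using averaging[OF that] by blast
    then show ?thesis unfolding ch_def by (rule someI_ex)
  qed
  have inv: "A i \<subseteq> V \<and> card (A i) = sz i" if "i \<le> m" for i
    using that
  proof (induction i)
    case 0 then show ?case using sz0 A_def by simp
  next
    case (Suc i)
    then have i: "i < m" by simp
    have ih: "A i \<subseteq> V \<and> card (A i) = sz i" using Suc by simp
    have fin: "finite (A i)" using ih finV finite_subset by blast
    have g: "good (A i) (ch (Suc i) (A i)) (sz (Suc i))" using ch_good[OF fin] ih szm[OF i] by simp
    have "A (Suc i) = ch (Suc i) (A i)" using i A_def by simp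
    then show ?case using g ih unfolding good_def by auto
  qed
  have Astep: "A (Suc i) = ch (Suc i) (A i) \<and> good (A i) (A (Suc i)) (sz (Suc i))" if i: "i < m" for i
  proof -
    have ih: "A i \<subseteq> V \<and> card (A i) = sz i" using inv i by simp
    have fin: "finite (A i)" using ih finV finite_subset by blast
    have "A (Suc i) = ch (Suc i) (A i)" using i A_def by simp
    then show ?thesis using ch_good[OF fin] ih szm[OF i] by simp
  qed
  have hi: "hier V E w A m"
  proof (unfold_locales)
    show "A 0 = V" using A_def by simp
    show "A (Suc i) \<subseteq> A i" for i
    proof (cases "i < m")
      case True then show ?thesis using Astep unfolding good_def by blast
    next
      case False then show ?thesis using A_def by simp
    qed
    show "A (Suc m) = {}" using A_def by simp
  qed
  interpret h: hier V E w A m by (rule hi)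
  have ne: "A i \<noteq> {}" if "i \<le> m" for i using inv[OF that] sz1[OF that] by auto
  have avg: "real (\<Sum>u\<in>A i. card {v\<in>A i. \<forall>w\<in>A (Suc i). D u v < D u w})
        \<le> real (card (A i)) * (card (A i) - card (A (Suc i))) / (card (A (Suc i)) + 1)" if i: "i < m" for i
  proof -
    have g: "good (A i) (A (Suc i)) (sz (Suc i))" using Astep[OF i] by blast
    show ?thesis using g inv[of i] inv[of "Suc i"] i unfolding good_def by simp
  qed
  have bound: "real (card h.H) \<le> (\<Sum>i<m. 2 * real (card (A i))^2 / real (card (A (Suc i)))) + real (card (A m))^2"
    using h.card_H_bound[OF ne avg] by simp
  have eqs: "(\<Sum>i<m. 2 * real (card (A i))^2 / real (card (A (Suc i)))) = (\<Sum>i<m. 2 * real (sz i)^2 / real (sz (Suc i)))"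
    by (rule sum.cong) (use inv in auto)
  show ?thesis
  proof (intro exI[of _ h.H] conjI allI impI)
    show "real (card h.H) \<le> (\<Sum>i<m. 2 * real (sz i)^2 / real (sz (Suc i))) + real (sz m)^2"
      using bound eqs inv[of m] by simp
    fix lv :: nat and \<epsilon> \<beta> :: real
    assume "16 \<le> lv" "16 * m \<le> lv" "16 * m / lv \<le> \<epsilon>" "real ((3*lv)^m) \<le> \<beta>"
    then show "is_hopset V E w h.H wD \<beta> \<epsilon>" by (rule h.hopset)
  qed
qed

end


lemma sizes:
  fixes n k :: nat
  assumes k1: "1 \<le> k" and nbig: "4 ^ (k - 1) \<le> n"
  defines "sz \<equiv> \<lambda>i. nat \<lceil>real n powr (1 - (2 ^ i - 1) / (2 ^ k - 1)) / 2 ^ i\<rceil>"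
  shows "sz 0 = n \<and> (\<forall>i<k-1. sz (Suc i) \<le> sz i) \<and> (\<forall>i\<le>k-1. 1 \<le> sz i) \<and>
    (\<Sum>i<k-1. 2 * real (sz i)^2 / real (sz (Suc i))) + real (sz (k-1))^2
      \<le> 36 * real n powr (1 + 1 / (2 ^ k - 1))"
proof -
  define x where "x = real n"
  define \<delta> :: real where "\<delta> = 1 / (2 ^ k - 1)"
  define e where "e i = 1 - (2 ^ i - 1) * \<delta>" for i :: nat
  define \<tau> where "\<tau> i = x powr e i / 2 ^ i" for i :: nat
  define N where "N = x powr (1 + \<delta>)"
  have k2: "(2::real) ^ k \<ge> 2" using k1 by (metis power_increasing power_one_right one_le_numeral)
  have dpos: "\<delta> > 0" unfolding \<delta>_def using k2 by simp
  have dprod: "(2 ^ k - 1) * \<delta> = 1" unfolding \<delta>_def using k2 by simp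
  have x1: "x \<ge> 1"
  proof -
    have "(1::nat) \<le> 4 ^ (k - 1)" by simp
    then show ?thesis using nbig x_def by linarith
  qed
  have xpos: "x > 0" using x1 by simp
  have sz_def': "sz i = nat \<lceil>\<tau> i\<rceil>" for i
    unfolding sz_def \<tau>_def e_def \<delta>_def using xpos x_def by simp
  have e0: "e 0 = 1" unfolding e_def by simp
  have tau0: "\<tau> 0 = x" unfolding \<tau>_def e0 using xpos by simp
  have ehalf: "e i \<ge> 1/2" if "i \<le> k - 1" for i
  proof -
    have "(2::real) ^ Suc i \<le> 2 ^ k" using that k1 by (intro power_increasing) auto
    then have "2 * (2 ^ i - 1) \<le> (2 ^ k - 1::real)" by simp
    then have "2 * ((2 ^ i - 1) * \<delta>) \<le> (2 ^ k - 1) * \<delta>" using dpos by (simp add: mult_right_mono)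
    then show ?thesis using dprod unfolding e_def by simp
  qed
  have emono: "e (Suc i) \<le> e i" for i
  proof -
    have "(2::real) ^ i \<le> 2 ^ Suc i" by simp
    then show ?thesis unfolding e_def using dpos by (simp add: mult_right_mono)
  qed
  have tau1: "\<tau> i \<ge> 1" if i: "i \<le> k - 1" for i
  proof -
    have "x powr (1/2) \<le> x powr e i" using ehalf[OF i] x1 by (intro powr_mono) auto
    moreover have "x powr (1/2) = sqrt x" using xpos by (simp add: powr_half_sqrt)
    moreover have "sqrt x \<ge> 2 ^ (k - 1)"
    proof -
      have "(4::real) ^ (k - 1) = (2 ^ (k - 1))^2"
        by (metis power_mult_distrib power2_eq_square num_double numeral_times_numeral power_mult_numeral)
      then have "sqrt ((2 ^ (k - 1))^2) \<le> sqrt x" using nbig x_def by (metis of_nat_le_iff of_nat_numeral of_nat_power real_sqrt_le_iff)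
      then show ?thesis by simp
    qed
    moreover have "(2::real) ^ i \<le> 2 ^ (k - 1)" using i by (intro power_increasing) auto
    ultimately have "2 ^ i \<le> x powr e i" by linarith
    then show ?thesis unfolding \<tau>_def by simp
  qed
  have taupos: "\<tau> i > 0" for i unfolding \<tau>_def using xpos by simp
  have taumono: "\<tau> (Suc i) \<le> \<tau> i" for i
  proof -
    have "x powr e (Suc i) \<le> x powr e i" using emono x1 by (intro powr_mono) auto
    moreover have "(2::real) ^ i \<le> 2 ^ Suc i" by simp
    ultimately show ?thesis unfolding \<tau>_def using xpos
      by (simp add: frac_le)
  qed
  have szeq: "real (sz i) = of_int \<lceil>\<tau> i\<rceil>" for i
  proof -
    have "\<lceil>\<tau> i\<rceil> \<ge> 0" using taupos[of i] by (simp add: order.strict_implies_order)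
    then show ?thesis using sz_def' by simp
  qed
  have szlo: "real (sz i) \<ge> \<tau> i" for i using szeq[of i] le_of_int_ceiling[of "\<tau> i"] by linarith
  have szhi: "real (sz i) \<le> 2 * \<tau> i" if "i \<le> k - 1" for i
  proof -
    have "real (sz i) \<le> \<tau> i + 1" using szeq[of i] ceiling_correct[of "\<tau> i"] by linarith
    then show ?thesis using tau1[OF that] by simp
  qed
  have part1: "sz 0 = n" using sz_def' tau0 x_def by simp
  have part2: "sz (Suc i) \<le> sz i" if "i < k - 1" for i
    using taumono[of i] unfolding sz_def' by (intro nat_mono ceiling_mono)
  have part3: "1 \<le> sz i" if "i \<le> k - 1" for i using szlo[of i] tau1[OF that] by linarith
  have key: "\<tau> i ^ 2 / \<tau> (Suc i) = 2 * N / 2 ^ i" for i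
  proof -
    have ee: "e i + e i - e (Suc i) = 1 + \<delta>" unfolding e_def by (simp add: algebra_simps)
    have "\<tau> i ^ 2 / \<tau> (Suc i) = (x powr e i * x powr e i / x powr e (Suc i)) * (2 ^ Suc i / (2 ^ i * 2 ^ i))"
      unfolding \<tau>_def by (simp add: power2_eq_square field_simps)
    also have "x powr e i * x powr e i / x powr e (Suc i) = N"
      unfolding N_def ee[symmetric] powr_diff powr_add by simp
    also have "(2::real) ^ Suc i / (2 ^ i * 2 ^ i) = 2 / 2 ^ i" by simp
    finally show ?thesis by simp
  qed
  have lev: "2 * real (sz i)^2 / real (sz (Suc i)) \<le> 16 * N / 2 ^ i" if i: "i < k - 1" for i
  proof -
    have "real (sz i)^2 \<le> (2 * \<tau> i)^2" using szhi[of i] i by (intro power_mono) auto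
    then have "real (sz i)^2 / real (sz (Suc i)) \<le> (2 * \<tau> i)^2 / \<tau> (Suc i)"
      using szlo[of "Suc i"] taupos[of "Suc i"] by (intro frac_le) auto
    also have "\<dots> = 4 * (\<tau> i ^ 2 / \<tau> (Suc i))" by (simp add: power2_eq_square)
    also have "\<dots> = 8 * N / 2 ^ i" using key by simp
    finally show ?thesis by simp
  qed
  have top: "real (sz (k-1))^2 \<le> 4 * N"
  proof -
    have "real (sz (k-1))^2 \<le> (2 * \<tau> (k-1))^2" using szhi[of "k-1"] by (intro power_mono) auto
    also have "\<dots> = 4 * (x powr e (k-1) * x powr e (k-1)) / (2 ^ (k-1) * 2 ^ (k-1))"
      unfolding \<tau>_def by (simp add: power2_eq_square)
    also have "x powr e (k-1) * x powr e (k-1) = N"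
    proof -
      have "(2::real) ^ k = 2 * 2 ^ (k - 1)" using k1 by (metis power_Suc Suc_diff_1 less_le_trans zero_less_one)
      then have "e (k-1) + e (k-1) = 1 + \<delta>" unfolding e_def using dprod by (simp add: algebra_simps)
      then show ?thesis unfolding N_def by (simp add: powr_add[symmetric])
    qed
    also have "4 * N / (2 ^ (k-1) * 2 ^ (k-1)) \<le> 4 * N"
    proof -
      have "(1::real) \<le> 2 ^ (k-1)" by simp
      then have "(1::real) \<le> 2 ^ (k-1) * 2 ^ (k-1)" by (metis mult_mono' one_le_numeral order_trans mult_1 zero_le_one)
      moreover have "N \<ge> 0" unfolding N_def by simp
      ultimately show ?thesis by (simp add: divide_le_eq mult_le_cancel_left1)
    qed
    finally show ?thesis .
  qed
  have geo: "(\<Sum>i<k-1. 16 * N / 2 ^ i) \<le> 32 * N"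
  proof -
    have "(\<Sum>i<k-1. 16 * N / 2 ^ i) = 16 * N * (\<Sum>i<k-1. (1/2::real) ^ i)"
      by (simp add: sum_distrib_left power_one_over)
    also have "(\<Sum>i<k-1. (1/2::real) ^ i) = 2 - 2 * (1/2) ^ (k-1)"
    proof -
      have "(\<Sum>i<k-1. (1/2::real) ^ i) = ((1/2) ^ (k-1) - 1) / ((1/2) - 1)" by (rule geometric_sum) simp
      then show ?thesis by (simp add: field_simps)
    qed
    also have "\<dots> \<le> 2" by simp
    finally show ?thesis unfolding N_def by (simp add: mult_left_mono)
  qed
  have "(\<Sum>i<k-1. 2 * real (sz i)^2 / real (sz (Suc i))) \<le> (\<Sum>i<k-1. 16 * N / 2 ^ i)"
    by (rule sum_mono) (use lev in simp)
  then have "(\<Sum>i<k-1. 2 * real (sz i)^2 / real (sz (Suc i))) + real (sz (k-1))^2 \<le> 36 * N"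
    using geo top by linarith
  then show ?thesis using part1 part2 part3 unfolding N_def x_def \<delta>_def by auto
qed


context wgraph begin

lemma path_uw_empty: "is_path V E xs u v \<Longrightarrow> path_length (union_weight E w {} wH) xs = path_length w xs"
proof (induction xs arbitrary: u)
  case (Cons a xs)
  then show ?case by (cases xs) (auto simp: is_path_Cons2 union_weight_def)
qed simp

lemma empty_hopset:
  assumes beta: "real (card V) \<le> \<beta>" and e0: "0 \<le> \<epsilon>"
  shows "is_hopset V E w {} wH \<beta> \<epsilon>"
  unfolding is_hopset_def
proof (intro conjI ballI allI impI)
  show "e \<subseteq> V" "card e = 2" if "e \<in> {}" for e using that by auto
  show "D u v \<le> ereal (wH {u,v})" if "{u,v} \<in> ({}::'a set set)" for u v using that by simp
  fix u v assume uv: "u \<in> V" "v \<in> V"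
  show "D u v \<le> hop_dist V (E \<union> {}) (union_weight E w {} wH) \<beta> u v"
    unfolding hop_dist_def
  proof (rule INF_greatest)
    fix xs assume "xs \<in> {xs. is_path V (E \<union> {}) xs u v \<and> real (path_hops xs) \<le> \<beta>}"
    then have p: "is_path V E xs u v" by simp
    show "D u v \<le> ereal (path_length (union_weight E w {} wH) xs)"
      using D_le_path[OF p] path_uw_empty[OF p] by simp
  qed
  show "hop_dist V (E \<union> {}) (union_weight E w {} wH) \<beta> u v \<le> ereal (1 + \<epsilon>) * D u v"
  proof (cases "D u v = \<infinity>")
    case True then show ?thesis using e0 by simp
  next
    case False
    then obtain P where sp: "sp P u v" using D_cases by blast
    then obtain ys where ys: "is_path V E ys u v" "distinct ys" "path_length w ys \<le> path_length w P"
      using simple_path unfolding sp_def by blast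
    have L0: "path_length w P \<ge> 0" using pl_nonneg sp unfolding sp_def by blast
    have "length ys \<le> card V"
      using ys(1,2) finV unfolding is_path_def by (metis card_mono distinct_card)
    then have "real (path_hops ys) \<le> \<beta>" using beta unfolding path_hops_def by linarith
    then have "hop_dist V (E \<union> {}) (union_weight E w {} wH) \<beta> u v \<le> ereal (path_length (union_weight E w {} wH) ys)"
      unfolding hop_dist_def using ys(1) by (intro INF_lower) simp
    also have "\<dots> \<le> ereal ((1 + \<epsilon>) * path_length w P)"
    proof -
      have "\<epsilon> * path_length w P \<ge> 0" using e0 L0 by simp
      then show ?thesis using path_uw_empty[OF ys(1)] ys(3) by (simp add: algebra_simps)
    qed
    also have "\<dots> = ereal (1 + \<epsilon>) * D u v" using sp_D[OF sp] by simp
    finally show ?thesis .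
  qed
qed

end

theorem mainTheorem3:
  shows "\<exists>C::real. C > 0 \<and>
    (\<forall>(V::nat set) E w (k::nat).
       undirected_graph V E \<longrightarrow> positive_weights E w \<longrightarrow> k \<ge> 1 \<longrightarrow>
       (\<exists>H wH. real (card H) \<le> C * real (card V) powr (1 + 1 / (2 ^ k - 1)) \<and>
          (\<forall>\<epsilon>::real. 0 < \<epsilon> \<and> \<epsilon> < 1 \<longrightarrow>
             is_hopset V E w H wH ((C * real k / \<epsilon>) ^ k) \<epsilon>)))"
proof (intro exI[of _ 64] conjI allI impI)
  show "(0::real) < 64" by simp
  fix V :: "nat set" and E w and k :: nat
  assume ug: "undirected_graph V E" and pw: "positive_weights E w" and k1: "1 \<le> k"
  interpret g: wgraph V E w using ug pw by unfold_locales
  have Npos: "0 \<le> 64 * real (card V) powr (1 + 1 / (2 ^ k - 1))" by simp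
  have base: "(64::real) \<le> 64 * real k / \<epsilon>" if e: "0 < \<epsilon>" "\<epsilon> < 1" for \<epsilon>
  proof -
    have "(64::real) \<le> 64 * real k" using k1 by simp
    also have "\<dots> \<le> 64 * real k / \<epsilon>"
    proof -
      have "real k * \<epsilon> \<le> real k * 1" using e by (intro mult_left_mono) auto
      then show ?thesis using e by (simp add: le_divide_eq)
    qed
    finally show ?thesis .
  qed
  show "\<exists>H wH. real (card H) \<le> 64 * real (card V) powr (1 + 1 / (2 ^ k - 1)) \<and>
          (\<forall>\<epsilon>::real. 0 < \<epsilon> \<and> \<epsilon> < 1 \<longrightarrow> is_hopset V E w H wH ((64 * real k / \<epsilon>) ^ k) \<epsilon>)"
  proof (cases "4 ^ (k - 1) \<le> card V")
    case False
    show ?thesis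
    proof (intro exI[of _ "{}"] exI[of _ "\<lambda>_. 0"] conjI allI impI)
      show "real (card {}) \<le> 64 * real (card V) powr (1 + 1 / (2 ^ k - 1))" using Npos by simp
      fix \<epsilon> :: real assume e: "0 < \<epsilon> \<and> \<epsilon> < 1"
      have "real (card V) \<le> 4 ^ (k - 1)" using False by simp
      also have "(4::real) ^ (k - 1) \<le> 64 ^ (k - 1)" by (rule power_mono) auto
      also have "(64::real) ^ (k - 1) \<le> 64 ^ k" by (rule power_increasing) auto
      also have "(64::real) ^ k \<le> (64 * real k / \<epsilon>) ^ k" using base e by (intro power_mono) auto
      finally show "is_hopset V E w {} (\<lambda>_. 0) ((64 * real k / \<epsilon>) ^ k) \<epsilon>"
        using e by (intro g.empty_hopset) auto
    qed
  next
    case True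
    define sz where "sz = (\<lambda>i. nat \<lceil>real (card V) powr (1 - (2 ^ i - 1) / (2 ^ k - 1)) / 2 ^ i\<rceil>)"
    have S: "sz 0 = card V \<and> (\<forall>i<k-1. sz (Suc i) \<le> sz i) \<and> (\<forall>i\<le>k-1. 1 \<le> sz i) \<and>
      (\<Sum>i<k-1. 2 * real (sz i)^2 / real (sz (Suc i))) + real (sz (k-1))^2
        \<le> 36 * real (card V) powr (1 + 1 / (2 ^ k - 1))"
      unfolding sz_def by (rule sizes[OF k1 True])
    have ex: "\<exists>H. real (card H) \<le> (\<Sum>i<k-1. 2 * real (sz i)^2 / real (sz (Suc i))) + real (sz (k-1))^2 \<and>
    (\<forall>lv \<epsilon> \<beta>. 16 \<le> lv \<longrightarrow> 16 * (k-1) \<le> lv \<longrightarrow> 16 * (k-1) / lv \<le> \<epsilon> \<longrightarrow> real ((3*lv)^(k-1)) \<le> \<beta> \<longrightarrow>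
       is_hopset V E w H g.wD \<beta> \<epsilon>)"
      by (rule g.construct) (use S in auto)
    obtain H where H: "real (card H) \<le> (\<Sum>i<k-1. 2 * real (sz i)^2 / real (sz (Suc i))) + real (sz (k-1))^2"
      "\<forall>lv \<epsilon> \<beta>. 16 \<le> lv \<longrightarrow> 16 * (k-1) \<le> lv \<longrightarrow> 16 * (k-1) / lv \<le> \<epsilon> \<longrightarrow> real ((3*lv)^(k-1)) \<le> \<beta> \<longrightarrow>
         is_hopset V E w H g.wD \<beta> \<epsilon>"
      using ex by blast
    show ?thesis
    proof (intro exI[of _ H] exI[of _ g.wD] conjI allI impI)
      show "real (card H) \<le> 64 * real (card V) powr (1 + 1 / (2 ^ k - 1))"
        using H(1) S Npos by linarith
      fix \<epsilon> :: real assume e: "0 < \<epsilon> \<and> \<epsilon> < 1"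
      define lv where "lv = nat \<lceil>16 * real k / \<epsilon>\<rceil>"
      have kk: "real k \<le> real k / \<epsilon>"
      proof -
        have "real k * \<epsilon> \<le> real k * 1" using e by (intro mult_left_mono) auto
        then show ?thesis using e by (simp add: le_divide_eq)
      qed
      have lv1: "16 * real k / \<epsilon> \<le> real lv" unfolding lv_def by linarith
      have lv2: "real lv \<le> 16 * real k / \<epsilon> + 1"
      proof -
        have "16 * real k / \<epsilon> \<ge> 0" using e by simp
        then show ?thesis unfolding lv_def by linarith
      qed
      have "16 * real k \<le> real lv" using lv1 kk by linarith
      then have c1: "16 \<le> lv" "16 * (k-1) \<le> lv" using k1 by linarith+
      have lvpos: "real lv > 0" using c1 by simp
      have c3: "16 * real (k-1) / real lv \<le> \<epsilon>"
      proof -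
        have "16 * real (k-1) \<le> 16 * real k" by simp
        also have "\<dots> \<le> \<epsilon> * real lv" using lv1 e by (simp add: divide_le_eq mult.commute)
        finally show ?thesis using lvpos by (simp add: divide_le_eq mult.commute)
      qed
      have c4: "real ((3*lv)^(k-1)) \<le> (64 * real k / \<epsilon>) ^ k"
      proof -
        have "real (3*lv) \<le> 3 * (16 * real k / \<epsilon> + 1)" using lv2 by simp
        also have "\<dots> \<le> 64 * real k / \<epsilon>"
        proof -
          have q: "1 \<le> real k / \<epsilon>" using kk k1 by linarith
          define q where "q = real k / \<epsilon>"
          have eq1: "3 * (16 * real k / \<epsilon> + 1) = 48 * q + 3" unfolding q_def by (simp add: field_simps)
          have eq2: "64 * real k / \<epsilon> = 64 * q" unfolding q_def by simp
          show ?thesis unfolding eq1 eq2 using q q_def by linarith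
        qed
        finally have a: "real (3*lv) \<le> 64 * real k / \<epsilon>" .
        have "real ((3*lv)^(k-1)) = real (3*lv) ^ (k-1)" by simp
        also have "\<dots> \<le> (64 * real k / \<epsilon>) ^ (k-1)" using a by (intro power_mono) auto
        also have "\<dots> \<le> (64 * real k / \<epsilon>) ^ k"
        proof -
          have "1 \<le> 64 * real k / \<epsilon>" using base[of \<epsilon>] e by linarith
          then show ?thesis by (intro power_increasing) auto
        qed
        finally show ?thesis .
      qed
      show "is_hopset V E w H g.wD ((64 * real k / \<epsilon>) ^ k) \<epsilon>"
        using H(2) c1 c3 c4 by auto
    qed
  qed
qed


end
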